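(* Let $G$ be a graph with no induced $P_7$, $C_4$, $C_6$ or $C_7$, let $H=(B_1,\dots,B_5)$ be a maximal nice blowup of $C_5$ in $G$, and let $i\in\{1,\dots,5\}$. If $xy$ is an edge with $x,y\in A_3(i)$, then $N_{B_i}(x)=N_{B_i}(y)$.
   Context: Indices modulo $5$. A nice blowup of $C_5$ is a tuple $(B_1,\dots,B_5)$ of pairwise disjoint cliques such that every vertex of $B_j$ has a neighbor in $B_{j-1}$ and in $B_{j+1}$, $B_j$ is anticomplete to $B_{j+2}$, and there are no $a\in B_j$, distinct $b,c\in B_{j+1}$, $d\in B_{j+2}$ with $G[\{a,b,c,d\}]\cong P_4$; $V(H)=\bigcup B_j$; maximal means no nice blowup has vertex set strictly containing $V(H)$. For $v\notin V(H)$, $\operatorname{supp}(v)$ is the set of $j$ such that $v$ has a neighbor in $B_j$; $A_3(i)=\{v\notin V(H):\operatorname{supp}(v)=\{i-1,i,i+1\}\}$; $N_S(v)$ is the set of neighbors of $v$ in $S$. *)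

theory Defs
  imports Main
begin

definition graph :: "'a set \<Rightarrow> ('a \<Rightarrow> 'a \<Rightarrow> bool) \<Rightarrow> bool" where
  "graph V E \<longleftrightarrow> finite V \<and> (\<forall>x y. E x y \<longrightarrow> x \<in> V \<and> y \<in> V)
     \<and> (\<forall>x y. E x y \<longrightarrow> E y x) \<and> (\<forall>x. \<not> E x x)"

definition path_adj :: "nat \<Rightarrow> nat \<Rightarrow> bool" where
  "path_adj i j \<longleftrightarrow> i = j + 1 \<or> j = i + 1"

definition cycle_adj :: "nat \<Rightarrow> nat \<Rightarrow> nat \<Rightarrow> bool" where
  "cycle_adj k i j \<longleftrightarrow> j = (i + 1) mod k \<or> i = (j + 1) mod k"

definition has_induced :: "'a set \<Rightarrow> ('a \<Rightarrow> 'a \<Rightarrow> bool) \<Rightarrow> nat \<Rightarrow> (nat \<Rightarrow> nat \<Rightarrow> bool) \<Rightarrow> bool" where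
  "has_induced V E k A \<longleftrightarrow> (\<exists>f. inj_on f {0..<k} \<and> f ` {0..<k} \<subseteq> V \<and>
     (\<forall>i<k. \<forall>j<k. E (f i) (f j) \<longleftrightarrow> A i j))"

definition induces_P4 :: "('a \<Rightarrow> 'a \<Rightarrow> bool) \<Rightarrow> 'a set \<Rightarrow> bool" where
  "induces_P4 E S \<longleftrightarrow> (\<exists>f. bij_betw f {0..<4::nat} S \<and>
     (\<forall>i<4. \<forall>j<4. E (f i) (f j) \<longleftrightarrow> path_adj i j))"

text \<open>Indices of the blowup are 0..4 (paper: 1..5), taken modulo 5.\<close>
definition nxt :: "nat \<Rightarrow> nat" where "nxt j = (j + 1) mod 5"
definition prv :: "nat \<Rightarrow> nat" where "prv j = (j + 4) mod 5"

definition nice_blowup :: "'a set \<Rightarrow> ('a \<Rightarrow> 'a \<Rightarrow> bool) \<Rightarrow> (nat \<Rightarrow> 'a set) \<Rightarrow> bool" where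
  "nice_blowup V E B \<longleftrightarrow>
     (\<forall>j<5. B j \<subseteq> V) \<and>
     (\<forall>j<5. \<forall>x\<in>B j. \<forall>y\<in>B j. x \<noteq> y \<longrightarrow> E x y) \<and>
     (\<forall>j<5. \<forall>k<5. j \<noteq> k \<longrightarrow> B j \<inter> B k = {}) \<and>
     (\<forall>j<5. \<forall>v\<in>B j. (\<exists>u\<in>B (prv j). E v u) \<and> (\<exists>u\<in>B (nxt j). E v u)) \<and>
     (\<forall>j<5. \<forall>x\<in>B j. \<forall>y\<in>B ((j + 2) mod 5). \<not> E x y) \<and>
     (\<forall>j<5. \<not> (\<exists>a\<in>B j. \<exists>b\<in>B (nxt j). \<exists>c\<in>B (nxt j). \<exists>d\<in>B (nxt (nxt j)).
         b \<noteq> c \<and> induces_P4 E {a, b, c, d}))"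

definition blowup_verts :: "(nat \<Rightarrow> 'a set) \<Rightarrow> 'a set" where
  "blowup_verts B = (\<Union>j<5. B j)"

definition maximal_nice_blowup :: "'a set \<Rightarrow> ('a \<Rightarrow> 'a \<Rightarrow> bool) \<Rightarrow> (nat \<Rightarrow> 'a set) \<Rightarrow> bool" where
  "maximal_nice_blowup V E B \<longleftrightarrow> nice_blowup V E B \<and>
     \<not> (\<exists>B'. nice_blowup V E B' \<and> blowup_verts B \<subset> blowup_verts B')"

definition supp :: "('a \<Rightarrow> 'a \<Rightarrow> bool) \<Rightarrow> (nat \<Rightarrow> 'a set) \<Rightarrow> 'a \<Rightarrow> nat set" where
  "supp E B v = {j. j < 5 \<and> (\<exists>u\<in>B j. E v u)}"

definition A3 :: "'a set \<Rightarrow> ('a \<Rightarrow> 'a \<Rightarrow> bool) \<Rightarrow> (nat \<Rightarrow> 'a set) \<Rightarrow> nat \<Rightarrow> 'a set" where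
  "A3 V E B i = {v \<in> V - blowup_verts B. supp E B v = {prv i, i, nxt i}}"

definition nbhd_in :: "('a \<Rightarrow> 'a \<Rightarrow> bool) \<Rightarrow> 'a set \<Rightarrow> 'a \<Rightarrow> 'a set" where
  "nbhd_in E S v = {u \<in> S. E v u}"

end

theory Submission
  imports Defs
begin

lemma hi_list:
  assumes "distinct xs" "set xs \<subseteq> V"
    and "\<And>i j. i < length xs \<Longrightarrow> j < length xs \<Longrightarrow> E (xs!i) (xs!j) = A i j"
  shows "has_induced V E (length xs) A"
  unfolding has_induced_def
proof (intro exI[of _ "nth xs"] conjI)
  show "inj_on (nth xs) {0..<length xs}" using assms(1) by (simp add: inj_on_nth)
  show "nth xs ` {0..<length xs} \<subseteq> V" using assms(2) nth_mem by fastforce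
  show "\<forall>i<length xs. \<forall>j<length xs. E (xs ! i) (xs ! j) = A i j" using assms(3) by simp
qed
lemma lt4: "(i::nat) < 4 \<Longrightarrow> i = 0 \<or> i = 1 \<or> i = 2 \<or> i = 3" by auto
lemma lt6: "(i::nat) < 6 \<Longrightarrow> i = 0 \<or> i = 1 \<or> i = 2 \<or> i = 3 \<or> i = 4 \<or> i = 5" by auto
lemma lt7: "(i::nat) < 7 \<Longrightarrow> i = 0 \<or> i = 1 \<or> i = 2 \<or> i = 3 \<or> i = 4 \<or> i = 5 \<or> i = 6" by auto
lemma all4: "(\<forall>i<(4::nat). P i) = (P 0 \<and> P 1 \<and> P 2 \<and> P 3)"
  by (auto dest: lt4)
lemma all6: "(\<forall>i<(6::nat). P i) = (P 0 \<and> P 1 \<and> P 2 \<and> P 3 \<and> P 4 \<and> P 5)"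
  by (auto dest: lt6)
lemma all7: "(\<forall>i<(7::nat). P i) = (P 0 \<and> P 1 \<and> P 2 \<and> P 3 \<and> P 4 \<and> P 5 \<and> P 6)"
  by (auto dest: lt7)
lemma lt5: "(i::nat) < 5 \<Longrightarrow> i = 0 \<or> i = 1 \<or> i = 2 \<or> i = 3 \<or> i = 4" by auto

lemma C4I:
  assumes s: "\<And>p q. E p q \<Longrightarrow> E q p"
  and irr: "\<And>p. \<not> E p p"
  and "p0 \<noteq> p1" "p0 \<noteq> p2" "p0 \<noteq> p3" "p1 \<noteq> p2" "p1 \<noteq> p3" "p2 \<noteq> p3" "p0 \<in> V" "p1 \<in> V" "p2 \<in> V" "p3 \<in> V" "E p0 p1" "\<not> E p0 p2" "E p0 p3" "E p1 p2" "\<not> E p1 p3" "E p2 p3"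
  shows "has_induced V E 4 (cycle_adj 4)"
proof -
  have sy: "E p1 p0" "E p3 p0" "E p2 p1" "E p3 p2" using s assms by blast+
  have sn: "\<not> E p2 p0" "\<not> E p3 p1" using s assms by blast+
  have "has_induced V E (length [p0,p1,p2,p3]) (cycle_adj 4)"
  proof (rule hi_list)
    have "\<forall>i<4. \<forall>j<4. E ([p0,p1,p2,p3]!i) ([p0,p1,p2,p3]!j) = cycle_adj 4 i j"
      unfolding all4 by (simp add: assms irr sy sn path_adj_def cycle_adj_def)
    then show "\<And>i j. i < length [p0,p1,p2,p3] \<Longrightarrow> j < length [p0,p1,p2,p3] \<Longrightarrow> E ([p0,p1,p2,p3]!i) ([p0,p1,p2,p3]!j) = cycle_adj 4 i j" by simp
  qed (use assms in auto)
  then show ?thesis by (simp add: eval_nat_numeral)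
qed

lemma C6I:
  assumes s: "\<And>p q. E p q \<Longrightarrow> E q p"
  and irr: "\<And>p. \<not> E p p"
  and "p0 \<noteq> p1" "p0 \<noteq> p2" "p0 \<noteq> p3" "p0 \<noteq> p4" "p0 \<noteq> p5" "p1 \<noteq> p2" "p1 \<noteq> p3" "p1 \<noteq> p4" "p1 \<noteq> p5" "p2 \<noteq> p3" "p2 \<noteq> p4" "p2 \<noteq> p5" "p3 \<noteq> p4" "p3 \<noteq> p5" "p4 \<noteq> p5" "p0 \<in> V" "p1 \<in> V" "p2 \<in> V" "p3 \<in> V" "p4 \<in> V" "p5 \<in> V" "E p0 p1" "\<not> E p0 p2" "\<not> E p0 p3" "\<not> E p0 p4" "E p0 p5" "E p1 p2" "\<not> E p1 p3" "\<not> E p1 p4" "\<not> E p1 p5" "E p2 p3" "\<not> E p2 p4" "\<not> E p2 p5" "E p3 p4" "\<not> E p3 p5" "E p4 p5"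
  shows "has_induced V E 6 (cycle_adj 6)"
proof -
  have sy: "E p1 p0" "E p5 p0" "E p2 p1" "E p3 p2" "E p4 p3" "E p5 p4" using s assms by blast+
  have sn: "\<not> E p2 p0" "\<not> E p3 p0" "\<not> E p4 p0" "\<not> E p3 p1" "\<not> E p4 p1" "\<not> E p5 p1" "\<not> E p4 p2" "\<not> E p5 p2" "\<not> E p5 p3" using s assms by blast+
  have "has_induced V E (length [p0,p1,p2,p3,p4,p5]) (cycle_adj 6)"
  proof (rule hi_list)
    have "\<forall>i<6. \<forall>j<6. E ([p0,p1,p2,p3,p4,p5]!i) ([p0,p1,p2,p3,p4,p5]!j) = cycle_adj 6 i j"
      unfolding all6 by (simp add: assms irr sy sn path_adj_def cycle_adj_def)
    then show "\<And>i j. i < length [p0,p1,p2,p3,p4,p5] \<Longrightarrow> j < length [p0,p1,p2,p3,p4,p5] \<Longrightarrow> E ([p0,p1,p2,p3,p4,p5]!i) ([p0,p1,p2,p3,p4,p5]!j) = cycle_adj 6 i j" by simp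
  qed (use assms in auto)
  then show ?thesis by (simp add: eval_nat_numeral)
qed

lemma C7I:
  assumes s: "\<And>p q. E p q \<Longrightarrow> E q p"
  and irr: "\<And>p. \<not> E p p"
  and "p0 \<noteq> p1" "p0 \<noteq> p2" "p0 \<noteq> p3" "p0 \<noteq> p4" "p0 \<noteq> p5" "p0 \<noteq> p6" "p1 \<noteq> p2" "p1 \<noteq> p3" "p1 \<noteq> p4" "p1 \<noteq> p5" "p1 \<noteq> p6" "p2 \<noteq> p3" "p2 \<noteq> p4" "p2 \<noteq> p5" "p2 \<noteq> p6" "p3 \<noteq> p4" "p3 \<noteq> p5" "p3 \<noteq> p6" "p4 \<noteq> p5" "p4 \<noteq> p6" "p5 \<noteq> p6" "p0 \<in> V" "p1 \<in> V" "p2 \<in> V" "p3 \<in> V" "p4 \<in> V" "p5 \<in> V" "p6 \<in> V" "E p0 p1" "\<not> E p0 p2" "\<not> E p0 p3" "\<not> E p0 p4" "\<not> E p0 p5" "E p0 p6" "E p1 p2" "\<not> E p1 p3" "\<not> E p1 p4" "\<not> E p1 p5" "\<not> E p1 p6" "E p2 p3" "\<not> E p2 p4" "\<not> E p2 p5" "\<not> E p2 p6" "E p3 p4" "\<not> E p3 p5" "\<not> E p3 p6" "E p4 p5" "\<not> E p4 p6" "E p5 p6"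
  shows "has_induced V E 7 (cycle_adj 7)"
proof -
  have sy: "E p1 p0" "E p6 p0" "E p2 p1" "E p3 p2" "E p4 p3" "E p5 p4" "E p6 p5" using s assms by blast+
  have sn: "\<not> E p2 p0" "\<not> E p3 p0" "\<not> E p4 p0" "\<not> E p5 p0" "\<not> E p3 p1" "\<not> E p4 p1" "\<not> E p5 p1" "\<not> E p6 p1" "\<not> E p4 p2" "\<not> E p5 p2" "\<not> E p6 p2" "\<not> E p5 p3" "\<not> E p6 p3" "\<not> E p6 p4" using s assms by blast+
  have "has_induced V E (length [p0,p1,p2,p3,p4,p5,p6]) (cycle_adj 7)"
  proof (rule hi_list)
    have "\<forall>i<7. \<forall>j<7. E ([p0,p1,p2,p3,p4,p5,p6]!i) ([p0,p1,p2,p3,p4,p5,p6]!j) = cycle_adj 7 i j"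
      unfolding all7 by (simp add: assms irr sy sn path_adj_def cycle_adj_def)
    then show "\<And>i j. i < length [p0,p1,p2,p3,p4,p5,p6] \<Longrightarrow> j < length [p0,p1,p2,p3,p4,p5,p6] \<Longrightarrow> E ([p0,p1,p2,p3,p4,p5,p6]!i) ([p0,p1,p2,p3,p4,p5,p6]!j) = cycle_adj 7 i j" by simp
  qed (use assms in auto)
  then show ?thesis by (simp add: eval_nat_numeral)
qed

lemma P7I:
  assumes s: "\<And>p q. E p q \<Longrightarrow> E q p"
  and irr: "\<And>p. \<not> E p p"
  and "p0 \<noteq> p1" "p0 \<noteq> p2" "p0 \<noteq> p3" "p0 \<noteq> p4" "p0 \<noteq> p5" "p0 \<noteq> p6" "p1 \<noteq> p2" "p1 \<noteq> p3" "p1 \<noteq> p4" "p1 \<noteq> p5" "p1 \<noteq> p6" "p2 \<noteq> p3" "p2 \<noteq> p4" "p2 \<noteq> p5" "p2 \<noteq> p6" "p3 \<noteq> p4" "p3 \<noteq> p5" "p3 \<noteq> p6" "p4 \<noteq> p5" "p4 \<noteq> p6" "p5 \<noteq> p6" "p0 \<in> V" "p1 \<in> V" "p2 \<in> V" "p3 \<in> V" "p4 \<in> V" "p5 \<in> V" "p6 \<in> V" "E p0 p1" "\<not> E p0 p2" "\<not> E p0 p3" "\<not> E p0 p4" "\<not> E p0 p5" "\<not> E p0 p6" "E p1 p2" "\<not> E p1 p3" "\<not> E p1 p4" "\<not> E p1 p5" "\<not> E p1 p6" "E p2 p3" "\<not> E p2 p4" "\<not> E p2 p5" "\<not> E p2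 p6" "E p3 p4" "\<not> E p3 p5" "\<not> E p3 p6" "E p4 p5" "\<not> E p4 p6" "E p5 p6"
  shows "has_induced V E 7 (path_adj)"
proof -
  have sy: "E p1 p0" "E p2 p1" "E p3 p2" "E p4 p3" "E p5 p4" "E p6 p5" using s assms by blast+
  have sn: "\<not> E p2 p0" "\<not> E p3 p0" "\<not> E p4 p0" "\<not> E p5 p0" "\<not> E p6 p0" "\<not> E p3 p1" "\<not> E p4 p1" "\<not> E p5 p1" "\<not> E p6 p1" "\<not> E p4 p2" "\<not> E p5 p2" "\<not> E p6 p2" "\<not> E p5 p3" "\<not> E p6 p3" "\<not> E p6 p4" using s assms by blast+
  have "has_induced V E (length [p0,p1,p2,p3,p4,p5,p6]) (path_adj)"
  proof (rule hi_list)
    have "\<forall>i<7. \<forall>j<7. E ([p0,p1,p2,p3,p4,p5,p6]!i) ([p0,p1,p2,p3,p4,p5,p6]!j) = path_adj i j"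
      unfolding all7 by (simp add: assms irr sy sn path_adj_def cycle_adj_def)
    then show "\<And>i j. i < length [p0,p1,p2,p3,p4,p5,p6] \<Longrightarrow> j < length [p0,p1,p2,p3,p4,p5,p6] \<Longrightarrow> E ([p0,p1,p2,p3,p4,p5,p6]!i) ([p0,p1,p2,p3,p4,p5,p6]!j) = path_adj i j" by simp
  qed (use assms in auto)
  then show ?thesis by (simp add: eval_nat_numeral)
qed


lemma P4idx: "(ia::nat) < 4 \<Longrightarrow> ib < 4 \<Longrightarrow> ic < 4 \<Longrightarrow> jd < 4 \<Longrightarrow> ia \<noteq> ib \<Longrightarrow> ia \<noteq> ic \<Longrightarrow> ia \<noteq> jd \<Longrightarrow> ib \<noteq> ic \<Longrightarrow> ib \<noteq> jd \<Longrightarrow> ic \<noteq> jd \<Longrightarrow>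
  path_adj ib ic \<Longrightarrow> \<not> path_adj ia jd \<Longrightarrow>
  (path_adj ia ib \<and> path_adj ic jd \<and> \<not> path_adj ia ic \<and> \<not> path_adj ib jd) \<or> (path_adj ia ic \<and> path_adj ib jd \<and> \<not> path_adj ia ib \<and> \<not> path_adj ic jd)"
  apply (drule lt4)+
  by (elim disjE; simp add: path_adj_def)

lemma P4I:
  assumes s: "\<And>p q. E p q \<Longrightarrow> E q p" and irr: "\<And>p. \<not> E p p"
    and d: "distinct [a,b,c,d]" and "E a b" "E b c" "E c d" "\<not> E a c" "\<not> E b d" "\<not> E a d"
  shows "induces_P4 E {a,b,c,d}"
  unfolding induces_P4_def
proof (intro exI[of _ "nth [a,b,c,d]"] conjI)
  show "bij_betw (nth [a,b,c,d]) {0..<4} {a,b,c,d}"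
    by (rule bij_betw_nth[OF d]) auto
  have sy: "E b a" "E c b" "E d c" "\<not> E c a" "\<not> E d b" "\<not> E d a" using assms by blast+
  show "\<forall>i<4. \<forall>j<4. E ([a,b,c,d] ! i) ([a,b,c,d] ! j) = path_adj i j"
    unfolding all4 using assms(4-9) sy irr by (simp add: path_adj_def)
qed

lemma P4D:
  assumes s: "\<And>p q. E p q \<Longrightarrow> E q p"
    and d: "distinct [a,b,c,d]" and P: "induces_P4 E {a,b,c,d}" and bc: "E b c" and ad: "\<not> E a d"
  shows "(E a b \<and> E c d \<and> \<not> E a c \<and> \<not> E b d) \<or> (E a c \<and> E b d \<and> \<not> E a b \<and> \<not> E c d)"
proof -
  obtain f where bij: "bij_betw f {0..<4::nat} {a,b,c,d}" and fa: "\<forall>i<4. \<forall>j<4. E (f i) (f j) \<longleftrightarrow> path_adj i j"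
    using P unfolding induces_P4_def by blast
  have "a \<in> f ` {0..<4}" "b \<in> f ` {0..<4}" "c \<in> f ` {0..<4}" "d \<in> f ` {0..<4}"
    using bij unfolding bij_betw_def by auto
  then obtain ia ib ic jd where i: "ia < 4" "ib < 4" "ic < 4" "jd < 4"
    and e: "a = f ia" "b = f ib" "c = f ic" "d = f jd" by auto
  have dist: "ia \<noteq> ib" "ia \<noteq> ic" "ia \<noteq> jd" "ib \<noteq> ic" "ib \<noteq> jd" "ic \<noteq> jd"
    using d e by auto
  have E: "\<And>p q. p < 4 \<Longrightarrow> q < 4 \<Longrightarrow> E (f p) (f q) = path_adj p q" using fa by blast
  have "E a b = path_adj ia ib" "E a c = path_adj ia ic" "E c d = path_adj ic jd" "E b d = path_adj ib jd"
       "E b c = path_adj ib ic" "E a d = path_adj ia jd"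
    using E i e by auto
  note eqs = this
  have "(path_adj ia ib \<and> path_adj ic jd \<and> \<not> path_adj ia ic \<and> \<not> path_adj ib jd) \<or> (path_adj ia ic \<and> path_adj ib jd \<and> \<not> path_adj ia ib \<and> \<not> path_adj ic jd)"
    by (rule P4idx) (use i dist eqs bc ad in auto)
  then show ?thesis using eqs by simp
qed

lemma d1mod: "(k::nat) mod 5 \<noteq> (k+1) mod 5 \<and> (k::nat) mod 5 \<noteq> (k+2) mod 5 \<and> ((k::nat)+1) mod 5 \<noteq> (k+2) mod 5"
proof -
  have m: "k mod 5 < 5" by simp
  have e: "(k+1) mod 5 = (k mod 5 + 1) mod 5" "(k+2) mod 5 = (k mod 5 + 2) mod 5" by (rule mod_add_left_eq[symmetric])+
  show ?thesis unfolding e using lt5[OF m] by (elim disjE; simp)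
qed

locale S =
  fixes V :: "'a set" and E :: "'a \<Rightarrow> 'a \<Rightarrow> bool" and B :: "nat \<Rightarrow> 'a set" and i :: nat
  assumes G: "graph V E"
    and nP7: "\<not> has_induced V E 7 path_adj"
    and nC4: "\<not> has_induced V E 4 (cycle_adj 4)"
    and nC6: "\<not> has_induced V E 6 (cycle_adj 6)"
    and nC7: "\<not> has_induced V E 7 (cycle_adj 7)"
    and NB: "nice_blowup V E B"
    and i5: "i < 5"
begin

definition cl :: "nat \<Rightarrow> nat" where "cl k = (i + k) mod 5"


lemmas NB' = NB[unfolded nice_blowup_def]
lemmas NB1 = conjunct1[OF NB']
lemmas NB2 = conjunct1[OF conjunct2[OF NB']]
lemmas NB3 = conjunct1[OF conjunct2[OF conjunct2[OF NB']]]
lemmas NB4 = conjunct1[OF conjunct2[OF conjunct2[OF conjunct2[OF NB']]]]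
lemmas NB5 = conjunct1[OF conjunct2[OF conjunct2[OF conjunct2[OF conjunct2[OF NB']]]]]
lemmas NB6 = conjunct2[OF conjunct2[OF conjunct2[OF conjunct2[OF conjunct2[OF NB']]]]]

lemma Esym: "E a b \<Longrightarrow> E b a" using G unfolding graph_def by blast
lemma nEsym: "\<not> E a b \<Longrightarrow> \<not> E b a" using G unfolding graph_def by blast
lemma Eirr: "\<not> E a a" using G unfolding graph_def by blast

lemma cl5: "cl k < 5" unfolding cl_def by simp
lemma cl0: "cl 0 = i" unfolding cl_def using i5 by simp
lemma cl1: "cl 1 = nxt i" unfolding cl_def nxt_def by simp
lemma cl4: "cl 4 = prv i" unfolding cl_def prv_def by simp
lemma nxt_cl: "nxt (cl k) = cl ((k+1) mod 5)" unfolding cl_def nxt_def by (metis add.assoc mod_add_left_eq mod_add_right_eq)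
lemma prv_cl: "prv (cl k) = cl ((k+4) mod 5)" unfolding cl_def prv_def by (metis add.assoc mod_add_left_eq mod_add_right_eq)
lemma plus2_cl: "(cl k + 2) mod 5 = cl ((k+2) mod 5)" unfolding cl_def by (metis add.assoc mod_add_left_eq mod_add_right_eq)

lemma cl_inj: assumes "k < 5" "l < 5" "cl k = cl l" shows "k = l"
proof -
  have h: "(i+k) mod 5 = (i+l) mod 5" using assms(3) unfolding cl_def .
  show ?thesis using lt5[OF i5] lt5[OF assms(1)] lt5[OF assms(2)] h by (elim disjE; simp)
qed

lemma inVB: "a \<in> B (cl k) \<Longrightarrow> a \<in> V"
  using NB1 cl5 by blast
lemma inVA: "a \<in> A3 V E B i \<Longrightarrow> a \<in> V"
  unfolding A3_def by blast

lemma clq: "a \<in> B (cl k) \<Longrightarrow> b \<in> B (cl k) \<Longrightarrow> a \<noteq> b \<Longrightarrow> E a b"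
  using NB2 cl5 by blast

lemma anti_gen: "a \<in> B (cl k) \<Longrightarrow> b \<in> B (cl ((k+2) mod 5)) \<Longrightarrow> \<not> E a b"
  using NB5 cl5[of k] plus2_cl[of k] by metis

lemma neq_gen: "a \<in> B (cl k) \<Longrightarrow> b \<in> B (cl l) \<Longrightarrow> k < 5 \<Longrightarrow> l < 5 \<Longrightarrow> k \<noteq> l \<Longrightarrow> a \<noteq> b"
proof
  assume "a \<in> B (cl k)" "b \<in> B (cl l)" "k < 5" "l < 5" "k \<noteq> l" "a = b"
  then have "cl k \<noteq> cl l" using cl_inj by blast
  then have "B (cl k) \<inter> B (cl l) = {}" using NB3 cl5 by blast
  then show False using \<open>a \<in> B (cl k)\<close> \<open>b \<in> B (cl l)\<close> \<open>a = b\<close> by blast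
qed

lemma bv: "a \<in> B (cl k) \<Longrightarrow> a \<in> blowup_verts B"
  unfolding blowup_verts_def using cl5 by blast

lemma neqAB: "a \<in> A3 V E B i \<Longrightarrow> b \<in> B (cl k) \<Longrightarrow> a \<noteq> b"
  using bv unfolding A3_def by blast
lemma neqBA: "a \<in> B (cl k) \<Longrightarrow> b \<in> A3 V E B i \<Longrightarrow> a \<noteq> b"
  using bv unfolding A3_def by blast

lemma suppA: "a \<in> A3 V E B i \<Longrightarrow> supp E B a = {cl 4, cl 0, cl 1}"
  unfolding A3_def using cl0 cl1 cl4 by simp

lemma antiA_gen: "a \<in> A3 V E B i \<Longrightarrow> b \<in> B (cl k) \<Longrightarrow> k = 2 \<or> k = 3 \<Longrightarrow> \<not> E a b"
proof
  assume a: "a \<in> A3 V E B i" and b: "b \<in> B (cl k)" and k: "k = 2 \<or> k = 3" and e: "E a b"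
  then have "cl k \<in> supp E B a" unfolding supp_def using cl5 by blast
  then have "cl k \<in> {cl 4, cl 0, cl 1}" using suppA[OF a] by simp
  then show False using k cl_inj[of k 4] cl_inj[of k 0] cl_inj[of k 1] by auto
qed

lemma witA_gen: "a \<in> A3 V E B i \<Longrightarrow> k = 4 \<or> k = 0 \<or> k = 1 \<Longrightarrow> \<exists>t\<in>B (cl k). E a t"
proof -
  assume a: "a \<in> A3 V E B i" and k: "k = 4 \<or> k = 0 \<or> k = 1"
  then have "cl k \<in> supp E B a" using suppA[OF a] by auto
  then show ?thesis unfolding supp_def by blast
qed

lemma wit_up_gen: "a \<in> B (cl k) \<Longrightarrow> \<exists>t\<in>B (cl ((k+1) mod 5)). E a t"
  using NB4 cl5[of k] nxt_cl[of k] by metis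
lemma wit_dn_gen: "a \<in> B (cl k) \<Longrightarrow> \<exists>t\<in>B (cl ((k+4) mod 5)). E a t"
  using NB4 cl5[of k] prv_cl[of k] by metis

lemma nice_gen:
  assumes "a \<in> B (cl k)" "b \<in> B (cl ((k+1) mod 5))" "c \<in> B (cl ((k+1) mod 5))" "d \<in> B (cl ((k+2) mod 5))"
    "b \<noteq> c" "E a b" "E c d" "\<not> E a c" "\<not> E b d"
  shows False
proof -
  have k5: "(k+1) mod 5 < 5" "(k+2) mod 5 < 5" "k mod 5 < 5" by auto
  have cls: "cl k = cl (k mod 5)" unfolding cl_def by (simp add: mod_add_right_eq)
  have d1: "k mod 5 \<noteq> (k+1) mod 5" "k mod 5 \<noteq> (k+2) mod 5" "(k+1) mod 5 \<noteq> (k+2) mod 5" using d1mod[of k] by auto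
  have a': "a \<in> B (cl (k mod 5))" using assms(1) cls by simp
  have dist: "distinct [a,b,c,d]"
    using neq_gen[OF a' assms(2)] neq_gen[OF a' assms(3)] neq_gen[OF a' assms(4)]
      neq_gen[OF assms(2) assms(4)] neq_gen[OF assms(3) assms(4)] assms(5) k5 d1 by auto
  have "E b c" using clq[OF assms(2,3,5)] .
  have "\<not> E a d" using anti_gen[OF assms(1)] assms(4) by (simp add: add.commute)
  have P: "induces_P4 E {a,b,c,d}"
    by (rule P4I[OF Esym Eirr dist]) (use assms \<open>E b c\<close> \<open>\<not> E a d\<close> in auto)
  have nx1: "nxt (cl k) = cl ((k+1) mod 5)" by (rule nxt_cl)
  have nx2: "nxt (nxt (cl k)) = cl (((k+1) mod 5 + 1) mod 5)" by (simp only: nxt_cl)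
  have m2: "((k+1) mod 5 + 1) mod 5 = (k+2) mod 5" by (simp add: mod_Suc_eq)
  have nx: "nxt (cl k) = cl ((k+1) mod 5)" "nxt (nxt (cl k)) = cl ((k+2) mod 5)"
    using nx1 nx2 m2 by simp_all
  have "\<not> (\<exists>a\<in>B (cl k). \<exists>b\<in>B (nxt (cl k)). \<exists>c\<in>B (nxt (cl k)). \<exists>d\<in>B (nxt (nxt (cl k))).
         b \<noteq> c \<and> induces_P4 E {a, b, c, d})"
    by (rule NB6[rule_format, OF cl5[of k]])
  then have "\<not> (\<exists>a\<in>B (cl k). \<exists>b\<in>B (cl ((k+1) mod 5)). \<exists>c\<in>B (cl ((k+1) mod 5)). \<exists>d\<in>B (cl ((k+2) mod 5)).
         b \<noteq> c \<and> induces_P4 E {a, b, c, d})" by (simp only: nxt_cl m2 not_False_eq_True)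
  moreover have "\<exists>a\<in>B (cl k). \<exists>b\<in>B (cl ((k+1) mod 5)). \<exists>c\<in>B (cl ((k+1) mod 5)). \<exists>d\<in>B (cl ((k+2) mod 5)).
         b \<noteq> c \<and> induces_P4 E {a, b, c, d}"
    apply (rule bexI[OF _ assms(1)]) apply (rule bexI[OF _ assms(2)]) apply (rule bexI[OF _ assms(3)]) apply (rule bexI[OF _ assms(4)])
    using assms(5) P by simp
  ultimately show False by (rule notE)
qed


lemma cl_mod: "cl (n mod 5) = cl n" unfolding cl_def by (simp add: mod_add_right_eq)
lemma cl_add5: "cl (n+5) = cl n" unfolding cl_def by (metis add.assoc mod_add_self2)
lemma anti_gen2: "a \<in> B (cl k) \<Longrightarrow> b \<in> B (cl (k+2)) \<Longrightarrow> \<not> E a b"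
  using anti_gen[of a k b] cl_mod[of "k+2"] by simp
lemma wit_up2: "a \<in> B (cl k) \<Longrightarrow> \<exists>t\<in>B (cl (k+1)). E a t"
  using wit_up_gen[of a k] cl_mod[of "k+1"] by simp
lemma wit_dn2: "a \<in> B (cl k) \<Longrightarrow> \<exists>t\<in>B (cl (k+4)). E a t"
  using wit_dn_gen[of a k] cl_mod[of "k+4"] by simp
lemma nice2: "a \<in> B (cl k) \<Longrightarrow> b \<in> B (cl (k+1)) \<Longrightarrow> c \<in> B (cl (k+1)) \<Longrightarrow> d \<in> B (cl (k+2)) \<Longrightarrow> b \<noteq> c \<Longrightarrow> E a b \<Longrightarrow> E c d \<Longrightarrow> \<not> E a c \<Longrightarrow> \<not> E b d \<Longrightarrow> False"
  using nice_gen[of a k b c d] cl_mod[of "k+1"] cl_mod[of "k+2"] by simp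

lemma anti_gen2r: "a \<in> B (cl (k+2)) \<Longrightarrow> b \<in> B (cl k) \<Longrightarrow> \<not> E a b"
  using anti_gen2[of b k a] nEsym by blast

lemma clE_0_1: "cl (0+1) = cl 1" by (simp add: eval_nat_numeral)
lemma clE_0_2: "cl (0+2) = cl 2" by (simp add: eval_nat_numeral)
lemma clE_0_4: "cl (0+4) = cl 4" by (simp add: eval_nat_numeral)
lemma clE_1_1: "cl (1+1) = cl 2" by (simp add: eval_nat_numeral)
lemma clE_1_2: "cl (1+2) = cl 3" by (simp add: eval_nat_numeral)
lemma clE_1_4: "cl (1+4) = cl 0"
proof -
  have "cl (1+4) = cl (0+5)" by simp
  then show ?thesis using cl_add5[of 0] by (rule trans)
qed
lemma clE_2_1: "cl (2+1) = cl 3" by (simp add: eval_nat_numeral)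
lemma clE_2_2: "cl (2+2) = cl 4" by (simp add: eval_nat_numeral)
lemma clE_2_4: "cl (2+4) = cl 1"
proof -
  have "cl (2+4) = cl (1+5)" by simp
  then show ?thesis using cl_add5[of 1] by (rule trans)
qed
lemma clE_3_1: "cl (3+1) = cl 4" by (simp add: eval_nat_numeral)
lemma clE_3_2: "cl (3+2) = cl 0"
proof -
  have "cl (3+2) = cl (0+5)" by simp
  then show ?thesis using cl_add5[of 0] by (rule trans)
qed
lemma clE_3_4: "cl (3+4) = cl 2"
proof -
  have "cl (3+4) = cl (2+5)" by simp
  then show ?thesis using cl_add5[of 2] by (rule trans)
qed
lemma clE_4_1: "cl (4+1) = cl 0"
proof -
  have "cl (4+1) = cl (0+5)" by simp
  then show ?thesis using cl_add5[of 0] by (rule trans)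
qed
lemma clE_4_2: "cl (4+2) = cl 1"
proof -
  have "cl (4+2) = cl (1+5)" by simp
  then show ?thesis using cl_add5[of 1] by (rule trans)
qed
lemma clE_4_4: "cl (4+4) = cl 3"
proof -
  have "cl (4+4) = cl (3+5)" by simp
  then show ?thesis using cl_add5[of 3] by (rule trans)
qed
lemma neq_0_1: "a \<in> B (cl 0) \<Longrightarrow> b \<in> B (cl 1) \<Longrightarrow> a \<noteq> b" by (rule neq_gen[of a 0 b 1]) simp_all
lemma anti_0_2: "a \<in> B (cl 0) \<Longrightarrow> b \<in> B (cl 2) \<Longrightarrow> \<not> E a b" by (rule anti_gen2[of a 0 b, unfolded clE_0_2])
lemma neq_0_2: "a \<in> B (cl 0) \<Longrightarrow> b \<in> B (cl 2) \<Longrightarrow> a \<noteq> b" by (rule neq_gen[of a 0 b 2]) simp_all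
lemma anti_0_3: "a \<in> B (cl 0) \<Longrightarrow> b \<in> B (cl 3) \<Longrightarrow> \<not> E a b" by (rule anti_gen2r[of a 3 b, unfolded clE_3_2])
lemma neq_0_3: "a \<in> B (cl 0) \<Longrightarrow> b \<in> B (cl 3) \<Longrightarrow> a \<noteq> b" by (rule neq_gen[of a 0 b 3]) simp_all
lemma neq_0_4: "a \<in> B (cl 0) \<Longrightarrow> b \<in> B (cl 4) \<Longrightarrow> a \<noteq> b" by (rule neq_gen[of a 0 b 4]) simp_all
lemma neq_1_0: "a \<in> B (cl 1) \<Longrightarrow> b \<in> B (cl 0) \<Longrightarrow> a \<noteq> b" by (rule neq_gen[of a 1 b 0]) simp_all
lemma neq_1_2: "a \<in> B (cl 1) \<Longrightarrow> b \<in> B (cl 2) \<Longrightarrow> a \<noteq> b" by (rule neq_gen[of a 1 b 2]) simp_all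
lemma anti_1_3: "a \<in> B (cl 1) \<Longrightarrow> b \<in> B (cl 3) \<Longrightarrow> \<not> E a b" by (rule anti_gen2[of a 1 b, unfolded clE_1_2])
lemma neq_1_3: "a \<in> B (cl 1) \<Longrightarrow> b \<in> B (cl 3) \<Longrightarrow> a \<noteq> b" by (rule neq_gen[of a 1 b 3]) simp_all
lemma anti_1_4: "a \<in> B (cl 1) \<Longrightarrow> b \<in> B (cl 4) \<Longrightarrow> \<not> E a b" by (rule anti_gen2r[of a 4 b, unfolded clE_4_2])
lemma neq_1_4: "a \<in> B (cl 1) \<Longrightarrow> b \<in> B (cl 4) \<Longrightarrow> a \<noteq> b" by (rule neq_gen[of a 1 b 4]) simp_all
lemma anti_2_0: "a \<in> B (cl 2) \<Longrightarrow> b \<in> B (cl 0) \<Longrightarrow> \<not> E a b" by (rule anti_gen2r[of a 0 b, unfolded clE_0_2])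
lemma neq_2_0: "a \<in> B (cl 2) \<Longrightarrow> b \<in> B (cl 0) \<Longrightarrow> a \<noteq> b" by (rule neq_gen[of a 2 b 0]) simp_all
lemma neq_2_1: "a \<in> B (cl 2) \<Longrightarrow> b \<in> B (cl 1) \<Longrightarrow> a \<noteq> b" by (rule neq_gen[of a 2 b 1]) simp_all
lemma neq_2_3: "a \<in> B (cl 2) \<Longrightarrow> b \<in> B (cl 3) \<Longrightarrow> a \<noteq> b" by (rule neq_gen[of a 2 b 3]) simp_all
lemma anti_2_4: "a \<in> B (cl 2) \<Longrightarrow> b \<in> B (cl 4) \<Longrightarrow> \<not> E a b" by (rule anti_gen2[of a 2 b, unfolded clE_2_2])
lemma neq_2_4: "a \<in> B (cl 2) \<Longrightarrow> b \<in> B (cl 4) \<Longrightarrow> a \<noteq> b" by (rule neq_gen[of a 2 b 4]) simp_all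
lemma anti_3_0: "a \<in> B (cl 3) \<Longrightarrow> b \<in> B (cl 0) \<Longrightarrow> \<not> E a b" by (rule anti_gen2[of a 3 b, unfolded clE_3_2])
lemma neq_3_0: "a \<in> B (cl 3) \<Longrightarrow> b \<in> B (cl 0) \<Longrightarrow> a \<noteq> b" by (rule neq_gen[of a 3 b 0]) simp_all
lemma anti_3_1: "a \<in> B (cl 3) \<Longrightarrow> b \<in> B (cl 1) \<Longrightarrow> \<not> E a b" by (rule anti_gen2r[of a 1 b, unfolded clE_1_2])
lemma neq_3_1: "a \<in> B (cl 3) \<Longrightarrow> b \<in> B (cl 1) \<Longrightarrow> a \<noteq> b" by (rule neq_gen[of a 3 b 1]) simp_all
lemma neq_3_2: "a \<in> B (cl 3) \<Longrightarrow> b \<in> B (cl 2) \<Longrightarrow> a \<noteq> b" by (rule neq_gen[of a 3 b 2]) simp_all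
lemma neq_3_4: "a \<in> B (cl 3) \<Longrightarrow> b \<in> B (cl 4) \<Longrightarrow> a \<noteq> b" by (rule neq_gen[of a 3 b 4]) simp_all
lemma neq_4_0: "a \<in> B (cl 4) \<Longrightarrow> b \<in> B (cl 0) \<Longrightarrow> a \<noteq> b" by (rule neq_gen[of a 4 b 0]) simp_all
lemma anti_4_1: "a \<in> B (cl 4) \<Longrightarrow> b \<in> B (cl 1) \<Longrightarrow> \<not> E a b" by (rule anti_gen2[of a 4 b, unfolded clE_4_2])
lemma neq_4_1: "a \<in> B (cl 4) \<Longrightarrow> b \<in> B (cl 1) \<Longrightarrow> a \<noteq> b" by (rule neq_gen[of a 4 b 1]) simp_all
lemma anti_4_2: "a \<in> B (cl 4) \<Longrightarrow> b \<in> B (cl 2) \<Longrightarrow> \<not> E a b" by (rule anti_gen2r[of a 2 b, unfolded clE_2_2])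
lemma neq_4_2: "a \<in> B (cl 4) \<Longrightarrow> b \<in> B (cl 2) \<Longrightarrow> a \<noteq> b" by (rule neq_gen[of a 4 b 2]) simp_all
lemma neq_4_3: "a \<in> B (cl 4) \<Longrightarrow> b \<in> B (cl 3) \<Longrightarrow> a \<noteq> b" by (rule neq_gen[of a 4 b 3]) simp_all
lemma antiA_2: "a \<in> A3 V E B i \<Longrightarrow> b \<in> B (cl 2) \<Longrightarrow> \<not> E a b" by (rule antiA_gen[of a b 2]) simp_all
lemma antiB_2: "a \<in> B (cl 2) \<Longrightarrow> b \<in> A3 V E B i \<Longrightarrow> \<not> E a b" by (rule nEsym, rule antiA_gen[of b a 2]) simp_all
lemma antiA_3: "a \<in> A3 V E B i \<Longrightarrow> b \<in> B (cl 3) \<Longrightarrow> \<not> E a b" by (rule antiA_gen[of a b 3]) simp_all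
lemma antiB_3: "a \<in> B (cl 3) \<Longrightarrow> b \<in> A3 V E B i \<Longrightarrow> \<not> E a b" by (rule nEsym, rule antiA_gen[of b a 3]) simp_all
lemma witA_4: "a \<in> A3 V E B i \<Longrightarrow> \<exists>t\<in>B (cl 4). E a t" by (rule witA_gen[of a 4]) simp_all
lemma witA_0: "a \<in> A3 V E B i \<Longrightarrow> \<exists>t\<in>B (cl 0). E a t" by (rule witA_gen[of a 0]) simp_all
lemma witA_1: "a \<in> A3 V E B i \<Longrightarrow> \<exists>t\<in>B (cl 1). E a t" by (rule witA_gen[of a 1]) simp_all
lemma wit_0_1: "a \<in> B (cl 0) \<Longrightarrow> \<exists>t\<in>B (cl 1). E a t" by (rule wit_up2[of a 0, unfolded clE_0_1])
lemma wit_0_4: "a \<in> B (cl 0) \<Longrightarrow> \<exists>t\<in>B (cl 4). E a t" by (rule wit_dn2[of a 0, unfolded clE_0_4])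
lemma nice_0: "a \<in> B (cl 0) \<Longrightarrow> b \<in> B (cl 1) \<Longrightarrow> c \<in> B (cl 1) \<Longrightarrow> d \<in> B (cl 2) \<Longrightarrow> b \<noteq> c \<Longrightarrow> E a b \<Longrightarrow> E c d \<Longrightarrow> \<not> E a c \<Longrightarrow> \<not> E b d \<Longrightarrow> False" by (rule nice2[of a 0 b c d, unfolded clE_0_1 clE_0_2])
lemma wit_1_2: "a \<in> B (cl 1) \<Longrightarrow> \<exists>t\<in>B (cl 2). E a t" by (rule wit_up2[of a 1, unfolded clE_1_1])
lemma wit_1_0: "a \<in> B (cl 1) \<Longrightarrow> \<exists>t\<in>B (cl 0). E a t" by (rule wit_dn2[of a 1, unfolded clE_1_4])
lemma nice_1: "a \<in> B (cl 1) \<Longrightarrow> b \<in> B (cl 2) \<Longrightarrow> c \<in> B (cl 2) \<Longrightarrow> d \<in> B (cl 3) \<Longrightarrow> b \<noteq> c \<Longrightarrow> E a b \<Longrightarrow> E c d \<Longrightarrow> \<not> E a c \<Longrightarrow> \<not> E b d \<Longrightarrow> False" by (rule nice2[of a 1 b c d, unfolded clE_1_1 clE_1_2])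
lemma wit_2_3: "a \<in> B (cl 2) \<Longrightarrow> \<exists>t\<in>B (cl 3). E a t" by (rule wit_up2[of a 2, unfolded clE_2_1])
lemma wit_2_1: "a \<in> B (cl 2) \<Longrightarrow> \<exists>t\<in>B (cl 1). E a t" by (rule wit_dn2[of a 2, unfolded clE_2_4])
lemma nice_2: "a \<in> B (cl 2) \<Longrightarrow> b \<in> B (cl 3) \<Longrightarrow> c \<in> B (cl 3) \<Longrightarrow> d \<in> B (cl 4) \<Longrightarrow> b \<noteq> c \<Longrightarrow> E a b \<Longrightarrow> E c d \<Longrightarrow> \<not> E a c \<Longrightarrow> \<not> E b d \<Longrightarrow> False" by (rule nice2[of a 2 b c d, unfolded clE_2_1 clE_2_2])
lemma wit_3_4: "a \<in> B (cl 3) \<Longrightarrow> \<exists>t\<in>B (cl 4). E a t" by (rule wit_up2[of a 3, unfolded clE_3_1])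
lemma wit_3_2: "a \<in> B (cl 3) \<Longrightarrow> \<exists>t\<in>B (cl 2). E a t" by (rule wit_dn2[of a 3, unfolded clE_3_4])
lemma nice_3: "a \<in> B (cl 3) \<Longrightarrow> b \<in> B (cl 4) \<Longrightarrow> c \<in> B (cl 4) \<Longrightarrow> d \<in> B (cl 0) \<Longrightarrow> b \<noteq> c \<Longrightarrow> E a b \<Longrightarrow> E c d \<Longrightarrow> \<not> E a c \<Longrightarrow> \<not> E b d \<Longrightarrow> False" by (rule nice2[of a 3 b c d, unfolded clE_3_1 clE_3_2])
lemma wit_4_0: "a \<in> B (cl 4) \<Longrightarrow> \<exists>t\<in>B (cl 0). E a t" by (rule wit_up2[of a 4, unfolded clE_4_1])
lemma wit_4_3: "a \<in> B (cl 4) \<Longrightarrow> \<exists>t\<in>B (cl 3). E a t" by (rule wit_dn2[of a 4, unfolded clE_4_4])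
lemma nice_4: "a \<in> B (cl 4) \<Longrightarrow> b \<in> B (cl 0) \<Longrightarrow> c \<in> B (cl 0) \<Longrightarrow> d \<in> B (cl 1) \<Longrightarrow> b \<noteq> c \<Longrightarrow> E a b \<Longrightarrow> E c d \<Longrightarrow> \<not> E a c \<Longrightarrow> \<not> E b d \<Longrightarrow> False" by (rule nice2[of a 4 b c d, unfolded clE_4_1 clE_4_2])

lemma G1:
  assumes m_v: "v \<in> A3 V E B i"
    and m_a: "a \<in> B (cl 4)"
    and m_m: "m \<in> B (cl 0)"
    and m_d: "d \<in> B (cl 1)"
    and r0: "E v a"
    and r1: "E v m"
    and r2: "\<not> E v d"
    and r3: "\<not> E a m"
    and r4: "E m d"
  shows False
proof -
  obtain v4 where m_v4: "v4 \<in> B (cl 3)" and f1: "E a v4" using wit_4_3[OF m_a] by auto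
  obtain v5 where m_v5: "v5 \<in> B (cl 2)" and f2: "E d v5" using wit_1_2[OF m_d] by auto
  have f3: "\<not> E v4 v5"
  proof
    assume h4: "E v4 v5"
    show False by (rule notE[OF nC6 C6I[OF Esym Eirr neqAB[OF m_v m_a] neqAB[OF m_v m_v4] neqAB[OF m_v m_v5] neqAB[OF m_v m_d] neqAB[OF m_v m_m] neq_4_3[OF m_a m_v4] neq_4_2[OF m_a m_v5] neq_4_1[OF m_a m_d] neq_4_0[OF m_a m_m] neq_3_2[OF m_v4 m_v5] neq_3_1[OF m_v4 m_d] neq_3_0[OF m_v4 m_m] neq_2_1[OF m_v5 m_d] neq_2_0[OF m_v5 m_m] neq_1_0[OF m_d m_m] inVA[OF m_v] inVB[OF m_a] inVB[OF m_v4] inVB[OF m_v5] inVB[OF m_d] inVB[OF m_m] r0 antiA_3[OF m_v m_v4] antiA_2[OF m_v m_v5] r2 r1 f1 anti_4_2[OF m_a m_v5] anti_4_1[OF m_a m_d] r3 h4 anti_3_1[OF m_v4 m_d] anti_3_0[OF m_v4 m_m] Esym[OF f2] anti_2_0[OF m_v5 m_m] Esym[OF r4]]])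
  qed
  obtain v6 where m_v6: "v6 \<in> B (cl 2)" and f5: "E v4 v6" using wit_3_2[OF m_v4] by auto
  have n6: "v6 \<noteq> v5" using f5 f3 by auto
  show False
  proof (cases "E d v6")
    case True note h7 = True
    show False by (rule notE[OF nC6 C6I[OF Esym Eirr neqAB[OF m_v m_a] neqAB[OF m_v m_v4] neqAB[OF m_v m_v6] neqAB[OF m_v m_d] neqAB[OF m_v m_m] neq_4_3[OF m_a m_v4] neq_4_2[OF m_a m_v6] neq_4_1[OF m_a m_d] neq_4_0[OF m_a m_m] neq_3_2[OF m_v4 m_v6] neq_3_1[OF m_v4 m_d] neq_3_0[OF m_v4 m_m] neq_2_1[OF m_v6 m_d] neq_2_0[OF m_v6 m_m] neq_1_0[OF m_d m_m] inVA[OF m_v] inVB[OF m_a] inVB[OF m_v4] inVB[OF m_v6] inVB[OF m_d] inVB[OF m_m] r0 antiA_3[OF m_v m_v4] antiA_2[OF m_v m_v6] r2 r1 f1 anti_4_2[OF m_a m_v6] anti_4_1[OF m_a m_d] r3 f5 anti_3_1[OF m_v4 m_d] anti_3_0[OF m_v4 m_m] Esym[OF h7] anti_2_0[OF m_v6 m_m] Esym[OF r4]]])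
  next
    case False note h8 = False
    show False by (rule notE[OF nC7 C7I[OF Esym Eirr neqAB[OF m_v m_a] neqAB[OF m_v m_v4] neqAB[OF m_v m_v6] neqAB[OF m_v m_v5] neqAB[OF m_v m_d] neqAB[OF m_v m_m] neq_4_3[OF m_a m_v4] neq_4_2[OF m_a m_v6] neq_4_2[OF m_a m_v5] neq_4_1[OF m_a m_d] neq_4_0[OF m_a m_m] neq_3_2[OF m_v4 m_v6] neq_3_2[OF m_v4 m_v5] neq_3_1[OF m_v4 m_d] neq_3_0[OF m_v4 m_m] n6 neq_2_1[OF m_v6 m_d] neq_2_0[OF m_v6 m_m] neq_2_1[OF m_v5 m_d] neq_2_0[OF m_v5 m_m] neq_1_0[OF m_d m_m] inVA[OF m_v] inVB[OF m_a] inVB[OF m_v4] inVB[OF m_v6] inVB[OF m_v5] inVB[OF m_d] inVB[OF m_m] r0 antiA_3[OF m_v m_v4] antiA_2[OF m_v m_v6] antiA_2[OF m_v m_v5] r2 r1 f1 anti_4_2[OF m_a m_v6] anti_4_2[OF m_a m_v5] anti_4_1[OF m_a m_d] r3 f5 f3 anti_3_1[OF m_v4 m_d] anti_3_0[OF m_v4 m_m] clq[OF m_v6 m_v5 n6] nEsym[OF h8] anti_2_0[OF m_v6 m_m] Esym[OF f2] anti_2_0[OF m_v5 m_m] Esym[OF r4]]])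
  qed
qed

lemma G1m:
  assumes m_v: "v \<in> A3 V E B i"
    and m_d: "d \<in> B (cl 1)"
    and m_m: "m \<in> B (cl 0)"
    and m_a: "a \<in> B (cl 4)"
    and r0: "E v d"
    and r1: "E v m"
    and r2: "\<not> E v a"
    and r3: "\<not> E d m"
    and r4: "E m a"
  shows False
proof -
  obtain v4 where m_v4: "v4 \<in> B (cl 2)" and f9: "E d v4" using wit_1_2[OF m_d] by auto
  obtain v5 where m_v5: "v5 \<in> B (cl 3)" and f10: "E a v5" using wit_4_3[OF m_a] by auto
  have f11: "\<not> E v4 v5"
  proof
    assume h12: "E v4 v5"
    show False by (rule notE[OF nC6 C6I[OF Esym Eirr neqAB[OF m_v m_d] neqAB[OF m_v m_v4] neqAB[OF m_v m_v5] neqAB[OF m_v m_a] neqAB[OF m_v m_m] neq_1_2[OF m_d m_v4] neq_1_3[OF m_d m_v5] neq_1_4[OF m_d m_a] neq_1_0[OF m_d m_m] neq_2_3[OF m_v4 m_v5] neq_2_4[OF m_v4 m_a] neq_2_0[OF m_v4 m_m] neq_3_4[OF m_v5 m_a] neq_3_0[OF m_v5 m_m] neq_4_0[OF m_a m_m] inVA[OF m_v] inVB[OF m_d] inVB[OF m_v4] inVB[OF m_v5] inVB[OF m_a] inVB[OF m_m] r0 antiA_2[OF m_v m_v4] antiA_3[OF m_v m_v5] r2 r1 f9 anti_1_3[OF m_d m_v5] anti_1_4[OF m_d m_a] r3 h12 anti_2_4[OF m_v4 m_a] anti_2_0[OF m_v4 m_m] Esym[OF f10] anti_3_0[OF m_v5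 m_m] Esym[OF r4]]])
  qed
  obtain v6 where m_v6: "v6 \<in> B (cl 3)" and f13: "E v4 v6" using wit_2_3[OF m_v4] by auto
  have n14: "v6 \<noteq> v5" using f13 f11 by auto
  show False
  proof (cases "E a v6")
    case True note h15 = True
    show False by (rule notE[OF nC6 C6I[OF Esym Eirr neqAB[OF m_v m_d] neqAB[OF m_v m_v4] neqAB[OF m_v m_v6] neqAB[OF m_v m_a] neqAB[OF m_v m_m] neq_1_2[OF m_d m_v4] neq_1_3[OF m_d m_v6] neq_1_4[OF m_d m_a] neq_1_0[OF m_d m_m] neq_2_3[OF m_v4 m_v6] neq_2_4[OF m_v4 m_a] neq_2_0[OF m_v4 m_m] neq_3_4[OF m_v6 m_a] neq_3_0[OF m_v6 m_m] neq_4_0[OF m_a m_m] inVA[OF m_v] inVB[OF m_d] inVB[OF m_v4] inVB[OF m_v6] inVB[OF m_a] inVB[OF m_m] r0 antiA_2[OF m_v m_v4] antiA_3[OF m_v m_v6] r2 r1 f9 anti_1_3[OF m_d m_v6] anti_1_4[OF m_d m_a] r3 f13 anti_2_4[OF m_v4 m_a] anti_2_0[OF m_v4 m_m] Esym[OF h15] anti_3_0[OF m_v6 m_m] Esym[OF r4]]])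
  next
    case False note h16 = False
    show False by (rule notE[OF nC7 C7I[OF Esym Eirr neqAB[OF m_v m_d] neqAB[OF m_v m_v4] neqAB[OF m_v m_v6] neqAB[OF m_v m_v5] neqAB[OF m_v m_a] neqAB[OF m_v m_m] neq_1_2[OF m_d m_v4] neq_1_3[OF m_d m_v6] neq_1_3[OF m_d m_v5] neq_1_4[OF m_d m_a] neq_1_0[OF m_d m_m] neq_2_3[OF m_v4 m_v6] neq_2_3[OF m_v4 m_v5] neq_2_4[OF m_v4 m_a] neq_2_0[OF m_v4 m_m] n14 neq_3_4[OF m_v6 m_a] neq_3_0[OF m_v6 m_m] neq_3_4[OF m_v5 m_a] neq_3_0[OF m_v5 m_m] neq_4_0[OF m_a m_m] inVA[OF m_v] inVB[OF m_d] inVB[OF m_v4] inVB[OF m_v6] inVB[OF m_v5] inVB[OF m_a] inVB[OF m_m] r0 antiA_2[OF m_v m_v4] antiA_3[OF m_v m_v6] antiA_3[OF m_v m_v5] r2 r1 f9 anti_1_3[OF m_d m_v6] anti_1_3[OF m_d m_v5] anti_1_4[OF m_d m_a] r3 f13 f11 anti_2_4[OF m_v4 m_a] anti_2_0[OF m_v4 m_m] clq[OF m_v6 m_v5 n14] nEsym[OF h16] anti_3_0[OF m_v6 m_m] Esym[OF f10] anti_3_0[OF m_v5 m_m] Esym[OF r4]]])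
  qed
qed

lemma G2:
  assumes m_v: "v \<in> A3 V E B i"
    and m_a: "a \<in> B (cl 3)"
    and m_b: "b \<in> B (cl 4)"
    and m_c: "c \<in> B (cl 4)"
    and r0: "E a b"
    and r1: "\<not> E a c"
    and r2: "E c v"
    and r3: "\<not> E b v"
  shows False
proof -
  have n17: "b \<noteq> c" using nEsym[OF r3] Esym[OF r2] by auto
  obtain v4 where m_v4: "v4 \<in> B (cl 1)" and f18: "E v v4" using witA_1[OF m_v] by auto
  obtain v5 where m_v5: "v5 \<in> B (cl 2)" and f19: "E a v5" using wit_3_2[OF m_a] by auto
  have f20: "\<not> E v4 v5"
  proof
    assume h21: "E v4 v5"
    show False by (rule notE[OF nC6 C6I[OF Esym Eirr neqAB[OF m_v m_c] neqAB[OF m_v m_b] neqAB[OF m_v m_a] neqAB[OF m_v m_v5] neqAB[OF m_v m_v4] not_sym[OF n17] neq_4_3[OF m_c m_a] neq_4_2[OF m_c m_v5] neq_4_1[OF m_c m_v4] neq_4_3[OF m_b m_a] neq_4_2[OF m_b m_v5] neq_4_1[OF m_b m_v4] neq_3_2[OF m_a m_v5] neq_3_1[OF m_a m_v4] neq_2_1[OF m_v5 m_v4] inVA[OF m_v] inVB[OF m_c] inVB[OF m_b] inVB[OF m_a] inVB[OF m_v5] inVB[OF m_v4] Esym[OF r2] nEsym[OF r3] antiA_3[OF m_v m_a] antiA_2[OF m_v m_v5] f18 clq[OF m_c m_b not_sym[OF n17]] nEsym[OF r1] anti_4_2[OF m_c m_v5] anti_4_1[OF m_c m_v4] Esym[OF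 r0] anti_4_2[OF m_b m_v5] anti_4_1[OF m_b m_v4] f19 anti_3_1[OF m_a m_v4] Esym[OF h21]]])
  qed
  obtain v6 where m_v6: "v6 \<in> B (cl 2)" and f22: "E v4 v6" using wit_1_2[OF m_v4] by auto
  have n23: "v6 \<noteq> v5" using f22 f20 by auto
  show False
  proof (cases "E a v6")
    case True note h24 = True
    show False by (rule notE[OF nC6 C6I[OF Esym Eirr neqAB[OF m_v m_c] neqAB[OF m_v m_b] neqAB[OF m_v m_a] neqAB[OF m_v m_v6] neqAB[OF m_v m_v4] not_sym[OF n17] neq_4_3[OF m_c m_a] neq_4_2[OF m_c m_v6] neq_4_1[OF m_c m_v4] neq_4_3[OF m_b m_a] neq_4_2[OF m_b m_v6] neq_4_1[OF m_b m_v4] neq_3_2[OF m_a m_v6] neq_3_1[OF m_a m_v4] neq_2_1[OF m_v6 m_v4] inVA[OF m_v] inVB[OF m_c] inVB[OF m_b] inVB[OF m_a] inVB[OF m_v6] inVB[OF m_v4] Esym[OF r2] nEsym[OF r3] antiA_3[OF m_v m_a] antiA_2[OF m_v m_v6] f18 clq[OF m_c m_b not_sym[OF n17]] nEsym[OF r1] anti_4_2[OF m_c m_v6] anti_4_1[OF m_c m_v4] Esym[OF r0] anti_4_2[OF m_b m_v6] anti_4_1[OF m_b m_v4] h24 anti_3_1[OF m_a m_v4] Esym[OF f22]]])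
  next
    case False note h25 = False
    show False by (rule notE[OF nC7 C7I[OF Esym Eirr neqAB[OF m_v m_c] neqAB[OF m_v m_b] neqAB[OF m_v m_a] neqAB[OF m_v m_v5] neqAB[OF m_v m_v6] neqAB[OF m_v m_v4] not_sym[OF n17] neq_4_3[OF m_c m_a] neq_4_2[OF m_c m_v5] neq_4_2[OF m_c m_v6] neq_4_1[OF m_c m_v4] neq_4_3[OF m_b m_a] neq_4_2[OF m_b m_v5] neq_4_2[OF m_b m_v6] neq_4_1[OF m_b m_v4] neq_3_2[OF m_a m_v5] neq_3_2[OF m_a m_v6] neq_3_1[OF m_a m_v4] not_sym[OF n23] neq_2_1[OF m_v5 m_v4] neq_2_1[OF m_v6 m_v4] inVA[OF m_v] inVB[OF m_c] inVB[OF m_b] inVB[OF m_a] inVB[OF m_v5] inVB[OF m_v6] inVB[OF m_v4] Esym[OF r2] nEsym[OF r3] antiA_3[OF m_v m_a] antiA_2[OF m_v m_v5] antiA_2[OF m_v m_v6] f18 clq[OF m_c m_b not_sym[OF n17]] nEsym[OF r1] anti_4_2[OF m_c m_v5] anti_4_2[OF m_c m_v6] anti_4_1[OF m_c m_v4] Esym[OF r0] anti_4_2[OF m_b m_v5] anti_4_2[OF m_b m_v6] anti_4_1[OF m_b m_v4] f19 h25 anti_3_1[OF m_a m_v4] clq[OF m_v5 m_v6 not_sym[OF n23]] nEsym[OF f20] Esym[OF f22]]])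
  qed
qed

lemma G2m:
  assumes m_v: "v \<in> A3 V E B i"
    and m_d: "d \<in> B (cl 2)"
    and m_c: "c \<in> B (cl 1)"
    and m_b: "b \<in> B (cl 1)"
    and r0: "E d c"
    and r1: "\<not> E d b"
    and r2: "E b v"
    and r3: "\<not> E c v"
  shows False
proof -
  have n26: "c \<noteq> b" using nEsym[OF r3] Esym[OF r2] by auto
  obtain v4 where m_v4: "v4 \<in> B (cl 4)" and f27: "E v v4" using witA_4[OF m_v] by auto
  obtain v5 where m_v5: "v5 \<in> B (cl 3)" and f28: "E d v5" using wit_2_3[OF m_d] by auto
  have f29: "\<not> E v4 v5"
  proof
    assume h30: "E v4 v5"
    show False by (rule notE[OF nC6 C6I[OF Esym Eirr neqAB[OF m_v m_b] neqAB[OF m_v m_c] neqAB[OF m_v m_d] neqAB[OF m_v m_v5] neqAB[OF m_v m_v4] not_sym[OF n26] neq_1_2[OF m_b m_d] neq_1_3[OF m_b m_v5] neq_1_4[OF m_b m_v4] neq_1_2[OF m_c m_d] neq_1_3[OF m_c m_v5] neq_1_4[OF m_c m_v4] neq_2_3[OF m_d m_v5] neq_2_4[OF m_d m_v4] neq_3_4[OF m_v5 m_v4] inVA[OF m_v] inVB[OF m_b] inVB[OF m_c] inVB[OF m_d] inVB[OF m_v5] inVB[OF m_v4] Esym[OF r2] nEsym[OF r3] antiA_2[OF m_v m_d] antiA_3[OF m_v m_v5] f27 clq[OF m_b m_c not_sym[OF n26]] nEsym[OF r1] anti_1_3[OF m_b m_v5] anti_1_4[OF m_b m_v4] Esym[OF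 r0] anti_1_3[OF m_c m_v5] anti_1_4[OF m_c m_v4] f28 anti_2_4[OF m_d m_v4] Esym[OF h30]]])
  qed
  obtain v6 where m_v6: "v6 \<in> B (cl 3)" and f31: "E v4 v6" using wit_4_3[OF m_v4] by auto
  have n32: "v6 \<noteq> v5" using f31 f29 by auto
  show False
  proof (cases "E d v6")
    case True note h33 = True
    show False by (rule notE[OF nC6 C6I[OF Esym Eirr neqAB[OF m_v m_b] neqAB[OF m_v m_c] neqAB[OF m_v m_d] neqAB[OF m_v m_v6] neqAB[OF m_v m_v4] not_sym[OF n26] neq_1_2[OF m_b m_d] neq_1_3[OF m_b m_v6] neq_1_4[OF m_b m_v4] neq_1_2[OF m_c m_d] neq_1_3[OF m_c m_v6] neq_1_4[OF m_c m_v4] neq_2_3[OF m_d m_v6] neq_2_4[OF m_d m_v4] neq_3_4[OF m_v6 m_v4] inVA[OF m_v] inVB[OF m_b] inVB[OF m_c] inVB[OF m_d] inVB[OF m_v6] inVB[OF m_v4] Esym[OF r2] nEsym[OF r3] antiA_2[OF m_v m_d] antiA_3[OF m_v m_v6] f27 clq[OF m_b m_c not_sym[OF n26]] nEsym[OF r1] anti_1_3[OF m_b m_v6] anti_1_4[OF m_b m_v4] Esym[OF r0] anti_1_3[OF m_c m_v6] anti_1_4[OF m_c m_v4] h33 anti_2_4[OF m_d m_v4] Esym[OF f31]]])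
  next
    case False note h34 = False
    show False by (rule notE[OF nC7 C7I[OF Esym Eirr neqAB[OF m_v m_b] neqAB[OF m_v m_c] neqAB[OF m_v m_d] neqAB[OF m_v m_v5] neqAB[OF m_v m_v6] neqAB[OF m_v m_v4] not_sym[OF n26] neq_1_2[OF m_b m_d] neq_1_3[OF m_b m_v5] neq_1_3[OF m_b m_v6] neq_1_4[OF m_b m_v4] neq_1_2[OF m_c m_d] neq_1_3[OF m_c m_v5] neq_1_3[OF m_c m_v6] neq_1_4[OF m_c m_v4] neq_2_3[OF m_d m_v5] neq_2_3[OF m_d m_v6] neq_2_4[OF m_d m_v4] not_sym[OF n32] neq_3_4[OF m_v5 m_v4] neq_3_4[OF m_v6 m_v4] inVA[OF m_v] inVB[OF m_b] inVB[OF m_c] inVB[OF m_d] inVB[OF m_v5] inVB[OF m_v6] inVB[OF m_v4] Esym[OF r2] nEsym[OF r3] antiA_2[OF m_v m_d] antiA_3[OF m_v m_v5] antiA_3[OF m_v m_v6] f27 clq[OF m_b m_c not_sym[OF n26]] nEsym[OF r1] anti_1_3[OF m_b m_v5] anti_1_3[OF m_b m_v6] anti_1_4[OF m_b m_v4] Esym[OF r0] anti_1_3[OF m_c m_v5] anti_1_3[OF m_c m_v6] anti_1_4[OF m_c m_v4] f28 h34 anti_2_4[OF m_d m_v4] clq[OF m_v5 m_v6 not_sym[OF n32]] nEsym[OF f29] Esym[OF f31]]])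
  qed
qed

lemma K1:
  assumes m_x: "x \<in> A3 V E B i"
    and m_y: "y \<in> A3 V E B i"
    and m_u: "u \<in> B (cl 0)"
    and m_z: "z \<in> B (cl 0)"
    and m_q: "q \<in> B (cl 1)"
    and m_b: "b \<in> B (cl 1)"
    and r0: "E x y"
    and r1: "E x u"
    and r2: "\<not> E y u"
    and r3: "\<not> E x z"
    and r4: "E z q"
    and r5: "\<not> E x q"
    and r6: "E x b"
    and r7: "\<not> E z b"
  shows False
proof -
  have n1: "x \<noteq> y" using r0 Eirr by blast
  have n2: "u \<noteq> z" using r1 r3 by auto
  have n3: "q \<noteq> b" using r5 r6 by auto
  have f4: "\<not> E y z"
  proof
    assume h5: "E y z"
    show False by (rule notE[OF nC4 C4I[OF Esym Eirr n1 neqAB[OF m_x m_z] neqAB[OF m_x m_u] neqAB[OF m_y m_z] neqAB[OF m_y m_u] not_sym[OF n2] inVA[OF m_x] inVA[OF m_y] inVB[OF m_z] inVB[OF m_u] r0 r3 r1 h5 r2 clq[OF m_z m_u not_sym[OF n2]]]])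
  qed
  obtain v6 where m_v6: "v6 \<in> B (cl 4)" and f6: "E y v6" using witA_4[OF m_y] by auto
  obtain v7 where m_v7: "v7 \<in> B (cl 4)" and f7: "E z v7" using wit_0_4[OF m_z] by auto
  show False
  proof (cases "v7 = v6")
    case True
    have f8: "E z v6" using f7 True by simp
    have f9: "\<not> E y q"
    proof
      assume h10: "E y q"
      show False by (rule notE[OF nC4 C4I[OF Esym Eirr neqAB[OF m_y m_q] neqAB[OF m_y m_z] neqAB[OF m_y m_v6] neq_1_0[OF m_q m_z] neq_1_4[OF m_q m_v6] neq_0_4[OF m_z m_v6] inVA[OF m_y] inVB[OF m_q] inVB[OF m_z] inVB[OF m_v6] h10 f4 f6 Esym[OF r4] anti_1_4[OF m_q m_v6] f8]])
    qed
    obtain v7 where m_v7: "v7 \<in> B (cl 4)" and f11: "E x v7" using witA_4[OF m_x] by auto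
    show False
    proof (cases "v7 = v6")
      case True
      have f12: "E x v6" using f11 True by simp
      have f13: "E u v6"
      proof (rule ccontr)
        assume h14: "\<not> E u v6"
        show False by (rule notE[OF nC4 C4I[OF Esym Eirr neqAB[OF m_x m_u] neqAB[OF m_x m_z] neqAB[OF m_x m_v6] n2 neq_0_4[OF m_u m_v6] neq_0_4[OF m_z m_v6] inVA[OF m_x] inVB[OF m_u] inVB[OF m_z] inVB[OF m_v6] r1 r3 f12 clq[OF m_u m_z n2] h14 f8]])
      qed
      show False
      proof (cases "E u q")
        case True note h15 = True
        have f16: "E u b"
        proof (rule ccontr)
          assume h17: "\<not> E u b"
          show False by (rule notE[OF nC4 C4I[OF Esym Eirr neqAB[OF m_x m_u] neqAB[OF m_x m_q] neqAB[OF m_x m_b] neq_0_1[OF m_u m_q] neq_0_1[OF m_u m_b] n3 inVA[OF m_x] inVB[OF m_u] inVB[OF m_q] inVB[OF m_b] r1 r5 r6 h15 h17 clq[OF m_q m_b n3]]])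
        qed
        have f18: "\<not> E y b"
        proof
          assume h19: "E y b"
          show False by (rule notE[OF nC4 C4I[OF Esym Eirr neqAB[OF m_y m_b] neqAB[OF m_y m_u] neqAB[OF m_y m_v6] neq_1_0[OF m_b m_u] neq_1_4[OF m_b m_v6] neq_0_4[OF m_u m_v6] inVA[OF m_y] inVB[OF m_b] inVB[OF m_u] inVB[OF m_v6] h19 r2 f6 Esym[OF f16] anti_1_4[OF m_b m_v6] f13]])
        qed
        obtain v7 where m_v7: "v7 \<in> B (cl 1)" and f20: "E y v7" using witA_1[OF m_y] by auto
        have n21: "v7 \<noteq> q" using f20 f9 by auto
        have n22: "v7 \<noteq> b" using f20 f18 by auto
        have f23: "E x v7"
        proof (rule ccontr)
          assume h24: "\<not> E x v7"
          show False by (rule notE[OF nC4 C4I[OF Esym Eirr n1 neqAB[OF m_x m_v7] neqAB[OF m_x m_b] neqAB[OF m_y m_v7] neqAB[OF m_y m_b] n22 inVA[OF m_x] inVA[OF m_y] inVB[OF m_v7] inVB[OF m_b] r0 h24 r6 f20 f18 clq[OF m_v7 m_b n22]]])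
        qed
        show False
        proof (cases "E u v7")
          case True note h25 = True
          show False by (rule notE[OF nC4 C4I[OF Esym Eirr neqAB[OF m_y m_v6] neqAB[OF m_y m_u] neqAB[OF m_y m_v7] neq_4_0[OF m_v6 m_u] neq_4_1[OF m_v6 m_v7] neq_0_1[OF m_u m_v7] inVA[OF m_y] inVB[OF m_v6] inVB[OF m_u] inVB[OF m_v7] f6 r2 f20 Esym[OF f13] anti_4_1[OF m_v6 m_v7] h25]])
        next
          case False note h26 = False
          show False by (rule notE[OF nC4 C4I[OF Esym Eirr neqAB[OF m_x m_u] neqAB[OF m_x m_q] neqAB[OF m_x m_v7] neq_0_1[OF m_u m_q] neq_0_1[OF m_u m_v7] not_sym[OF n21] inVA[OF m_x] inVB[OF m_u] inVB[OF m_q] inVB[OF m_v7] r1 r5 f23 h15 h26 clq[OF m_q m_v7 not_sym[OF n21]]]])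
        qed
      next
        case False note h27 = False
        have f28: "\<not> E u b"
        proof
          assume h29: "E u b"
          show False by (rule notE[OF nC4 C4I[OF Esym Eirr n2 neq_0_1[OF m_u m_q] neq_0_1[OF m_u m_b] neq_0_1[OF m_z m_q] neq_0_1[OF m_z m_b] n3 inVB[OF m_u] inVB[OF m_z] inVB[OF m_q] inVB[OF m_b] clq[OF m_u m_z n2] h27 h29 r4 r7 clq[OF m_q m_b n3]]])
        qed
        obtain v7 where m_v7: "v7 \<in> B (cl 1)" and f30: "E u v7" using wit_0_1[OF m_u] by auto
        have n31: "v7 \<noteq> q" using f30 h27 by auto
        have n32: "v7 \<noteq> b" using f30 f28 by auto
        have f33: "E x v7"
        proof (rule ccontr)
          assume h34: "\<not> E x v7"
          show False by (rule notE[OF nC4 C4I[OF Esym Eirr neqAB[OF m_x m_u] neqAB[OF m_x m_v7] neqAB[OF m_x m_b] neq_0_1[OF m_u m_v7] neq_0_1[OF m_u m_b] n32 inVA[OF m_x] inVB[OF m_u] inVB[OF m_v7] inVB[OF m_b] r1 h34 r6 f30 f28 clq[OF m_v7 m_b n32]]])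
        qed
        have f35: "\<not> E y v7"
        proof
          assume h36: "E y v7"
          show False by (rule notE[OF nC4 C4I[OF Esym Eirr neqAB[OF m_y m_v6] neqAB[OF m_y m_u] neqAB[OF m_y m_v7] neq_4_0[OF m_v6 m_u] neq_4_1[OF m_v6 m_v7] neq_0_1[OF m_u m_v7] inVA[OF m_y] inVB[OF m_v6] inVB[OF m_u] inVB[OF m_v7] f6 r2 h36 Esym[OF f13] anti_4_1[OF m_v6 m_v7] f30]])
        qed
        show False
        proof (cases "E z v7")
          case True note h37 = True
          show False by (rule notE[OF nC4 C4I[OF Esym Eirr neqAB[OF m_x m_v6] neqAB[OF m_x m_z] neqAB[OF m_x m_v7] neq_4_0[OF m_v6 m_z] neq_4_1[OF m_v6 m_v7] neq_0_1[OF m_z m_v7] inVA[OF m_x] inVB[OF m_v6] inVB[OF m_z] inVB[OF m_v7] f12 r3 f33 Esym[OF f8] anti_4_1[OF m_v6 m_v7] h37]])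
        next
          case False note h38 = False
          show False by (rule notE[OF nC4 C4I[OF Esym Eirr n2 neq_0_1[OF m_u m_q] neq_0_1[OF m_u m_v7] neq_0_1[OF m_z m_q] neq_0_1[OF m_z m_v7] not_sym[OF n31] inVB[OF m_u] inVB[OF m_z] inVB[OF m_q] inVB[OF m_v7] clq[OF m_u m_z n2] h27 f30 r4 h38 clq[OF m_q m_v7 not_sym[OF n31]]]])
        qed
      qed
    next
      case False note n39 = False
      show False
      proof (cases "E u q")
        case True note h40 = True
        have f41: "E u b"
        proof (rule ccontr)
          assume h42: "\<not> E u b"
          show False by (rule notE[OF nC4 C4I[OF Esym Eirr neqAB[OF m_x m_u] neqAB[OF m_x m_q] neqAB[OF m_x m_b] neq_0_1[OF m_u m_q] neq_0_1[OF m_u m_b] n3 inVA[OF m_x] inVB[OF m_u] inVB[OF m_q] inVB[OF m_b] r1 r5 r6 h40 h42 clq[OF m_q m_b n3]]])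
        qed
        have f43: "E u v6"
        proof (rule ccontr)
          assume h44: "\<not> E u v6"
          show False by (rule nice_4[OF m_v6 m_z m_u m_b not_sym[OF n2] Esym[OF f8] f41 nEsym[OF h44] r7])
        qed
        have f45: "E x v6"
        proof (rule ccontr)
          assume h46: "\<not> E x v6"
          show False by (rule notE[OF nC4 C4I[OF Esym Eirr n1 neqAB[OF m_x m_v6] neqAB[OF m_x m_u] neqAB[OF m_y m_v6] neqAB[OF m_y m_u] neq_4_0[OF m_v6 m_u] inVA[OF m_x] inVA[OF m_y] inVB[OF m_v6] inVB[OF m_u] r0 h46 r1 f6 r2 Esym[OF f43]]])
        qed
        have f47: "\<not> E y b"
        proof
          assume h48: "E y b"
          show False by (rule notE[OF nC4 C4I[OF Esym Eirr neqAB[OF m_y m_b] neqAB[OF m_y m_u] neqAB[OF m_y m_v6] neq_1_0[OF m_b m_u] neq_1_4[OF m_b m_v6] neq_0_4[OF m_u m_v6] inVA[OF m_y] inVB[OF m_b] inVB[OF m_u] inVB[OF m_v6] h48 r2 f6 Esym[OF f41] anti_1_4[OF m_b m_v6] f43]])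
        qed
        obtain v8 where m_v8: "v8 \<in> B (cl 1)" and f49: "E y v8" using witA_1[OF m_y] by auto
        have n50: "v8 \<noteq> q" using f49 f9 by auto
        have n51: "v8 \<noteq> b" using f49 f47 by auto
        have f52: "E x v8"
        proof (rule ccontr)
          assume h53: "\<not> E x v8"
          show False by (rule notE[OF nC4 C4I[OF Esym Eirr n1 neqAB[OF m_x m_v8] neqAB[OF m_x m_b] neqAB[OF m_y m_v8] neqAB[OF m_y m_b] n51 inVA[OF m_x] inVA[OF m_y] inVB[OF m_v8] inVB[OF m_b] r0 h53 r6 f49 f47 clq[OF m_v8 m_b n51]]])
        qed
        show False
        proof (cases "E u v8")
          case True note h54 = True
          show False by (rule notE[OF nC4 C4I[OF Esym Eirr neqAB[OF m_y m_v6] neqAB[OF m_y m_u] neqAB[OF m_y m_v8] neq_4_0[OF m_v6 m_u] neq_4_1[OF m_v6 m_v8] neq_0_1[OF m_u m_v8] inVA[OF m_y] inVB[OF m_v6] inVB[OF m_u] inVB[OF m_v8] f6 r2 f49 Esym[OF f43] anti_4_1[OF m_v6 m_v8] h54]])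
        next
          case False note h55 = False
          show False by (rule notE[OF nC4 C4I[OF Esym Eirr neqAB[OF m_x m_u] neqAB[OF m_x m_q] neqAB[OF m_x m_v8] neq_0_1[OF m_u m_q] neq_0_1[OF m_u m_v8] not_sym[OF n50] inVA[OF m_x] inVB[OF m_u] inVB[OF m_q] inVB[OF m_v8] r1 r5 f52 h40 h55 clq[OF m_q m_v8 not_sym[OF n50]]]])
        qed
      next
        case False note h56 = False
        have f57: "\<not> E u b"
        proof
          assume h58: "E u b"
          show False by (rule notE[OF nC4 C4I[OF Esym Eirr n2 neq_0_1[OF m_u m_q] neq_0_1[OF m_u m_b] neq_0_1[OF m_z m_q] neq_0_1[OF m_z m_b] n3 inVB[OF m_u] inVB[OF m_z] inVB[OF m_q] inVB[OF m_b] clq[OF m_u m_z n2] h56 h58 r4 r7 clq[OF m_q m_b n3]]])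
        qed
        obtain v8 where m_v8: "v8 \<in> B (cl 1)" and f59: "E u v8" using wit_0_1[OF m_u] by auto
        have n60: "v8 \<noteq> q" using f59 h56 by auto
        have n61: "v8 \<noteq> b" using f59 f57 by auto
        have f62: "E x v8"
        proof (rule ccontr)
          assume h63: "\<not> E x v8"
          show False by (rule notE[OF nC4 C4I[OF Esym Eirr neqAB[OF m_x m_u] neqAB[OF m_x m_v8] neqAB[OF m_x m_b] neq_0_1[OF m_u m_v8] neq_0_1[OF m_u m_b] n61 inVA[OF m_x] inVB[OF m_u] inVB[OF m_v8] inVB[OF m_b] r1 h63 r6 f59 f57 clq[OF m_v8 m_b n61]]])
        qed
        have f64: "E z v8"
        proof (rule ccontr)
          assume h65: "\<not> E z v8"
          show False by (rule notE[OF nC4 C4I[OF Esym Eirr n2 neq_0_1[OF m_u m_q] neq_0_1[OF m_u m_v8] neq_0_1[OF m_z m_q] neq_0_1[OF m_z m_v8] not_sym[OF n60] inVB[OF m_u] inVB[OF m_z] inVB[OF m_q] inVB[OF m_v8] clq[OF m_u m_z n2] h56 f59 r4 h65 clq[OF m_q m_v8 not_sym[OF n60]]]])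
        qed
        have f66: "\<not> E x v6"
        proof
          assume h67: "E x v6"
          show False by (rule notE[OF nC4 C4I[OF Esym Eirr neqAB[OF m_x m_v6] neqAB[OF m_x m_z] neqAB[OF m_x m_v8] neq_4_0[OF m_v6 m_z] neq_4_1[OF m_v6 m_v8] neq_0_1[OF m_z m_v8] inVA[OF m_x] inVB[OF m_v6] inVB[OF m_z] inVB[OF m_v8] h67 r3 f62 Esym[OF f8] anti_4_1[OF m_v6 m_v8] f64]])
        qed
        have f68: "E y b"
        proof (rule ccontr)
          assume h69: "\<not> E y b"
          show False by (rule notE[OF nC6 C6I[OF Esym Eirr n1 neqAB[OF m_x m_v6] neqAB[OF m_x m_z] neqAB[OF m_x m_q] neqAB[OF m_x m_b] neqAB[OF m_y m_v6] neqAB[OF m_y m_z] neqAB[OF m_y m_q] neqAB[OF m_y m_b] neq_4_0[OF m_v6 m_z] neq_4_1[OF m_v6 m_q] neq_4_1[OF m_v6 m_b] neq_0_1[OF m_z m_q] neq_0_1[OF m_z m_b] n3 inVA[OF m_x] inVA[OF m_y] inVB[OF m_v6] inVB[OF m_z] inVB[OF m_q] inVB[OF m_b] r0 f66 r3 r5 r6 f6 f4 f9 h69 Esym[OF f8] anti_4_1[OF m_v6 m_q] anti_4_1[OF m_v6 m_b] r4 r7 clq[OF m_q m_b n3]]])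
        qed
        have f70: "E y v7"
        proof (rule ccontr)
          assume h71: "\<not> E y v7"
          show False by (rule notE[OF nC4 C4I[OF Esym Eirr n1 neqAB[OF m_x m_v6] neqAB[OF m_x m_v7] neqAB[OF m_y m_v6] neqAB[OF m_y m_v7] not_sym[OF n39] inVA[OF m_x] inVA[OF m_y] inVB[OF m_v6] inVB[OF m_v7] r0 f66 f11 f6 h71 clq[OF m_v6 m_v7 not_sym[OF n39]]]])
        qed
        have f72: "\<not> E y v8"
        proof
          assume h73: "E y v8"
          show False by (rule notE[OF nC4 C4I[OF Esym Eirr neqAB[OF m_y m_v6] neqAB[OF m_y m_z] neqAB[OF m_y m_v8] neq_4_0[OF m_v6 m_z] neq_4_1[OF m_v6 m_v8] neq_0_1[OF m_z m_v8] inVA[OF m_y] inVB[OF m_v6] inVB[OF m_z] inVB[OF m_v8] f6 f4 h73 Esym[OF f8] anti_4_1[OF m_v6 m_v8] f64]])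
        qed
        have f74: "\<not> E u v6"
        proof
          assume h75: "E u v6"
          show False by (rule notE[OF nC4 C4I[OF Esym Eirr n1 neqAB[OF m_x m_v6] neqAB[OF m_x m_u] neqAB[OF m_y m_v6] neqAB[OF m_y m_u] neq_4_0[OF m_v6 m_u] inVA[OF m_x] inVA[OF m_y] inVB[OF m_v6] inVB[OF m_u] r0 f66 r1 f6 r2 Esym[OF h75]]])
        qed
        show False
        proof (cases "E z v7")
          case True note h76 = True
          show False by (rule notE[OF nC4 C4I[OF Esym Eirr neqAB[OF m_x m_v7] neqAB[OF m_x m_z] neqAB[OF m_x m_v8] neq_4_0[OF m_v7 m_z] neq_4_1[OF m_v7 m_v8] neq_0_1[OF m_z m_v8] inVA[OF m_x] inVB[OF m_v7] inVB[OF m_z] inVB[OF m_v8] f11 r3 f62 Esym[OF h76] anti_4_1[OF m_v7 m_v8] f64]])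
        next
          case False note h77 = False
          show False by (rule notE[OF nC6 C6I[OF Esym Eirr neqAB[OF m_x m_b] neqAB[OF m_x m_q] neqAB[OF m_x m_z] neqAB[OF m_x m_v6] neqAB[OF m_x m_v7] not_sym[OF n3] neq_1_0[OF m_b m_z] neq_1_4[OF m_b m_v6] neq_1_4[OF m_b m_v7] neq_1_0[OF m_q m_z] neq_1_4[OF m_q m_v6] neq_1_4[OF m_q m_v7] neq_0_4[OF m_z m_v6] neq_0_4[OF m_z m_v7] not_sym[OF n39] inVA[OF m_x] inVB[OF m_b] inVB[OF m_q] inVB[OF m_z] inVB[OF m_v6] inVB[OF m_v7] r6 r5 r3 f66 f11 clq[OF m_b m_q not_sym[OF n3]] nEsym[OF r7] anti_1_4[OF m_b m_v6] anti_1_4[OF m_b m_v7] Esym[OF r4] anti_1_4[OF m_q m_v6] anti_1_4[OF m_q m_v7] f8 h77 clq[OF m_v6 m_v7 not_sym[OF n39]]]])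
        qed
      qed
    qed
  next
    case False note n78 = False
    show False
    proof (cases "E u q")
      case True note h79 = True
      have f80: "\<not> E y q"
      proof
        assume h81: "E y q"
        show False by (rule notE[OF nC4 C4I[OF Esym Eirr n1 neqAB[OF m_x m_q] neqAB[OF m_x m_u] neqAB[OF m_y m_q] neqAB[OF m_y m_u] neq_1_0[OF m_q m_u] inVA[OF m_x] inVA[OF m_y] inVB[OF m_q] inVB[OF m_u] r0 r5 r1 h81 r2 Esym[OF h79]]])
      qed
      have f82: "E u b"
      proof (rule ccontr)
        assume h83: "\<not> E u b"
        show False by (rule notE[OF nC4 C4I[OF Esym Eirr neqAB[OF m_x m_u] neqAB[OF m_x m_q] neqAB[OF m_x m_b] neq_0_1[OF m_u m_q] neq_0_1[OF m_u m_b] n3 inVA[OF m_x] inVB[OF m_u] inVB[OF m_q] inVB[OF m_b] r1 r5 r6 h79 h83 clq[OF m_q m_b n3]]])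
      qed
      have f84: "E u v7"
      proof (rule ccontr)
        assume h85: "\<not> E u v7"
        show False by (rule nice_4[OF m_v7 m_z m_u m_b not_sym[OF n2] Esym[OF f7] f82 nEsym[OF h85] r7])
      qed
      obtain v8 where m_v8: "v8 \<in> B (cl 1)" and f86: "E y v8" using witA_1[OF m_y] by auto
      show False
      proof (cases "v8 = b")
        case True
        have f87: "E y b" using f86 True by simp
        have f88: "\<not> E y v7"
        proof
          assume h89: "E y v7"
          show False by (rule notE[OF nC4 C4I[OF Esym Eirr neqAB[OF m_y m_b] neqAB[OF m_y m_u] neqAB[OF m_y m_v7] neq_1_0[OF m_b m_u] neq_1_4[OF m_b m_v7] neq_0_4[OF m_u m_v7] inVA[OF m_y] inVB[OF m_b] inVB[OF m_u] inVB[OF m_v7] f87 r2 h89 Esym[OF f82] anti_1_4[OF m_b m_v7] f84]])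
        qed
        have f90: "\<not> E u v6"
        proof
          assume h91: "E u v6"
          show False by (rule notE[OF nC4 C4I[OF Esym Eirr neqAB[OF m_y m_b] neqAB[OF m_y m_u] neqAB[OF m_y m_v6] neq_1_0[OF m_b m_u] neq_1_4[OF m_b m_v6] neq_0_4[OF m_u m_v6] inVA[OF m_y] inVB[OF m_b] inVB[OF m_u] inVB[OF m_v6] f87 r2 f6 Esym[OF f82] anti_1_4[OF m_b m_v6] h91]])
        qed
        show False
        proof (cases "E z v6")
          case True note h92 = True
          show False by (rule nice_4[OF m_v6 m_z m_u m_b not_sym[OF n2] Esym[OF h92] f82 nEsym[OF f90] r7])
        next
          case False note h93 = False
          show False by (rule notE[OF nC6 C6I[OF Esym Eirr neqAB[OF m_y m_b] neqAB[OF m_y m_q] neqAB[OF m_y m_z] neqAB[OF m_y m_v7] neqAB[OF m_y m_v6] not_sym[OF n3] neq_1_0[OF m_b m_z] neq_1_4[OF m_b m_v7] neq_1_4[OF m_b m_v6] neq_1_0[OF m_q m_z] neq_1_4[OF m_q m_v7] neq_1_4[OF m_q m_v6] neq_0_4[OF m_z m_v7] neq_0_4[OF m_z m_v6] n78 inVA[OF m_y] inVB[OF m_b] inVB[OF m_q] inVB[OF m_z] inVB[OF m_v7] inVB[OF m_v6] f87 f80 f4 f88 f6 clq[OF m_b m_q not_sym[OF n3]] nEsym[OF r7] anti_1_4[OF m_b m_v7] anti_1_4[OF m_b m_v6] Esym[OF r4] anti_1_4[OF m_q m_v7] anti_1_4[OF m_q m_v6] f7 h93 clq[OF m_v7 m_v6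 n78]]])
        qed
      next
        case False note n94 = False
        have n95: "v8 \<noteq> q" using f86 f80 by auto
        show False
        proof (cases "E x v8")
          case True note h96 = True
          have f97: "E u v8"
          proof (rule ccontr)
            assume h98: "\<not> E u v8"
            show False by (rule notE[OF nC4 C4I[OF Esym Eirr neqAB[OF m_x m_u] neqAB[OF m_x m_q] neqAB[OF m_x m_v8] neq_0_1[OF m_u m_q] neq_0_1[OF m_u m_v8] not_sym[OF n95] inVA[OF m_x] inVB[OF m_u] inVB[OF m_q] inVB[OF m_v8] r1 r5 h96 h79 h98 clq[OF m_q m_v8 not_sym[OF n95]]]])
          qed
          have f99: "\<not> E y v7"
          proof
            assume h100: "E y v7"
            show False by (rule notE[OF nC4 C4I[OF Esym Eirr neqAB[OF m_y m_v7] neqAB[OF m_y m_u] neqAB[OF m_y m_v8] neq_4_0[OF m_v7 m_u] neq_4_1[OF m_v7 m_v8] neq_0_1[OF m_u m_v8] inVA[OF m_y] inVB[OF m_v7] inVB[OF m_u] inVB[OF m_v8] h100 r2 f86 Esym[OF f84] anti_4_1[OF m_v7 m_v8] f97]])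
          qed
          have f101: "\<not> E u v6"
          proof
            assume h102: "E u v6"
            show False by (rule notE[OF nC4 C4I[OF Esym Eirr neqAB[OF m_y m_v6] neqAB[OF m_y m_u] neqAB[OF m_y m_v8] neq_4_0[OF m_v6 m_u] neq_4_1[OF m_v6 m_v8] neq_0_1[OF m_u m_v8] inVA[OF m_y] inVB[OF m_v6] inVB[OF m_u] inVB[OF m_v8] f6 r2 f86 Esym[OF h102] anti_4_1[OF m_v6 m_v8] f97]])
          qed
          have f103: "\<not> E z v6"
          proof
            assume h104: "E z v6"
            show False by (rule nice_4[OF m_v6 m_z m_u m_b not_sym[OF n2] Esym[OF h104] f82 nEsym[OF f101] r7])
          qed
          have f105: "E z v8"
          proof (rule ccontr)
            assume h106: "\<not> E z v8"
            show False by (rule notE[OF nC6 C6I[OF Esym Eirr neqAB[OF m_y m_v6] neqAB[OF m_y m_v7] neqAB[OF m_y m_z] neqAB[OF m_y m_q] neqAB[OF m_y m_v8] not_sym[OF n78] neq_4_0[OF m_v6 m_z] neq_4_1[OF m_v6 m_q] neq_4_1[OF m_v6 m_v8] neq_4_0[OF m_v7 m_z] neq_4_1[OF m_v7 m_q] neq_4_1[OF m_v7 m_v8] neq_0_1[OF m_z m_q] neq_0_1[OF m_z m_v8] not_sym[OF n95] inVA[OF m_y] inVB[OF m_v6] inVB[OF m_v7] inVB[OF m_z] inVB[OF m_q] inVB[OF m_v8] f6 f99 f4 f80 f86 clq[OF m_v6 m_v7 not_sym[OF n78]] nEsym[OF f103] anti_4_1[OF m_v6 m_q] anti_4_1[OF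 m_v6 m_v8] Esym[OF f7] anti_4_1[OF m_v7 m_q] anti_4_1[OF m_v7 m_v8] r4 h106 clq[OF m_q m_v8 not_sym[OF n95]]]])
          qed
          have f107: "\<not> E x v7"
          proof
            assume h108: "E x v7"
            show False by (rule notE[OF nC4 C4I[OF Esym Eirr neqAB[OF m_x m_v7] neqAB[OF m_x m_z] neqAB[OF m_x m_v8] neq_4_0[OF m_v7 m_z] neq_4_1[OF m_v7 m_v8] neq_0_1[OF m_z m_v8] inVA[OF m_x] inVB[OF m_v7] inVB[OF m_z] inVB[OF m_v8] h108 r3 h96 Esym[OF f7] anti_4_1[OF m_v7 m_v8] f105]])
          qed
          have f109: "\<not> E y b"
          proof
            assume h110: "E y b"
            show False by (rule notE[OF nC6 C6I[OF Esym Eirr neqAB[OF m_y m_b] neqAB[OF m_y m_q] neqAB[OF m_y m_z] neqAB[OF m_y m_v7] neqAB[OF m_y m_v6] not_sym[OF n3] neq_1_0[OF m_b m_z] neq_1_4[OF m_b m_v7] neq_1_4[OF m_b m_v6] neq_1_0[OF m_q m_z] neq_1_4[OF m_q m_v7] neq_1_4[OF m_q m_v6] neq_0_4[OF m_z m_v7] neq_0_4[OF m_z m_v6] n78 inVA[OF m_y] inVB[OF m_b] inVB[OF m_q] inVB[OF m_z] inVB[OF m_v7] inVB[OF m_v6] h110 f80 f4 f99 f6 clq[OF m_b m_q not_sym[OF n3]] nEsym[OF r7] anti_1_4[OF m_b m_v7] anti_1_4[OF m_b m_v6] Esym[OF r4] anti_1_4[OF m_q m_v7] anti_1_4[OF m_q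 m_v6] f7 f103 clq[OF m_v7 m_v6 n78]]])
          qed
          show False
          proof (cases "E x v6")
            case True note h111 = True
            show False by (rule notE[OF nC4 C4I[OF Esym Eirr neqAB[OF m_x m_u] neqAB[OF m_x m_v7] neqAB[OF m_x m_v6] neq_0_4[OF m_u m_v7] neq_0_4[OF m_u m_v6] n78 inVA[OF m_x] inVB[OF m_u] inVB[OF m_v7] inVB[OF m_v6] r1 f107 h111 f84 f101 clq[OF m_v7 m_v6 n78]]])
          next
            case False note h112 = False
            show False by (rule notE[OF nC7 C7I[OF Esym Eirr n1 neqAB[OF m_x m_v6] neqAB[OF m_x m_v7] neqAB[OF m_x m_z] neqAB[OF m_x m_q] neqAB[OF m_x m_b] neqAB[OF m_y m_v6] neqAB[OF m_y m_v7] neqAB[OF m_y m_z] neqAB[OF m_y m_q] neqAB[OF m_y m_b] not_sym[OF n78] neq_4_0[OF m_v6 m_z] neq_4_1[OF m_v6 m_q] neq_4_1[OF m_v6 m_b] neq_4_0[OF m_v7 m_z] neq_4_1[OF m_v7 m_q] neq_4_1[OF m_v7 m_b] neq_0_1[OF m_z m_q] neq_0_1[OF m_z m_b] n3 inVA[OF m_x] inVA[OF m_y] inVB[OF m_v6] inVB[OF m_v7] inVB[OF m_z] inVB[OF m_q] inVB[OF m_b] r0 h112 f107 r3 r5 r6 f6 f99 f4 f80 f109 clq[OF m_v6 m_v7 not_sym[OF n78]] nEsym[OF f103] anti_4_1[OF m_v6 m_q] anti_4_1[OF m_v6 m_b] Esym[OF f7] anti_4_1[OF m_v7 m_q] anti_4_1[OF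 m_v7 m_b] r4 r7 clq[OF m_q m_b n3]]])
          qed
        next
          case False note h113 = False
          have f114: "E y b"
          proof (rule ccontr)
            assume h115: "\<not> E y b"
            show False by (rule notE[OF nC4 C4I[OF Esym Eirr n1 neqAB[OF m_x m_v8] neqAB[OF m_x m_b] neqAB[OF m_y m_v8] neqAB[OF m_y m_b] n94 inVA[OF m_x] inVA[OF m_y] inVB[OF m_v8] inVB[OF m_b] r0 h113 r6 f86 h115 clq[OF m_v8 m_b n94]]])
          qed
          have f116: "\<not> E y v7"
          proof
            assume h117: "E y v7"
            show False by (rule notE[OF nC4 C4I[OF Esym Eirr neqAB[OF m_y m_b] neqAB[OF m_y m_u] neqAB[OF m_y m_v7] neq_1_0[OF m_b m_u] neq_1_4[OF m_b m_v7] neq_0_4[OF m_u m_v7] inVA[OF m_y] inVB[OF m_b] inVB[OF m_u] inVB[OF m_v7] f114 r2 h117 Esym[OF f82] anti_1_4[OF m_b m_v7] f84]])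
          qed
          have f118: "\<not> E u v6"
          proof
            assume h119: "E u v6"
            show False by (rule notE[OF nC4 C4I[OF Esym Eirr neqAB[OF m_y m_b] neqAB[OF m_y m_u] neqAB[OF m_y m_v6] neq_1_0[OF m_b m_u] neq_1_4[OF m_b m_v6] neq_0_4[OF m_u m_v6] inVA[OF m_y] inVB[OF m_b] inVB[OF m_u] inVB[OF m_v6] f114 r2 f6 Esym[OF f82] anti_1_4[OF m_b m_v6] h119]])
          qed
          show False
          proof (cases "E u v8")
            case True note h120 = True
            show False by (rule notE[OF nC4 C4I[OF Esym Eirr n1 neqAB[OF m_x m_v8] neqAB[OF m_x m_u] neqAB[OF m_y m_v8] neqAB[OF m_y m_u] neq_1_0[OF m_v8 m_u] inVA[OF m_x] inVA[OF m_y] inVB[OF m_v8] inVB[OF m_u] r0 h113 r1 f86 r2 Esym[OF h120]]])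
          next
            case False note h121 = False
            show False by (rule notE[OF nC6 C6I[OF Esym Eirr neqAB[OF m_y m_v6] neqAB[OF m_y m_v7] neqAB[OF m_y m_u] neqAB[OF m_y m_q] neqAB[OF m_y m_v8] not_sym[OF n78] neq_4_0[OF m_v6 m_u] neq_4_1[OF m_v6 m_q] neq_4_1[OF m_v6 m_v8] neq_4_0[OF m_v7 m_u] neq_4_1[OF m_v7 m_q] neq_4_1[OF m_v7 m_v8] neq_0_1[OF m_u m_q] neq_0_1[OF m_u m_v8] not_sym[OF n95] inVA[OF m_y] inVB[OF m_v6] inVB[OF m_v7] inVB[OF m_u] inVB[OF m_q] inVB[OF m_v8] f6 f116 r2 f80 f86 clq[OF m_v6 m_v7 not_sym[OF n78]] nEsym[OF f118] anti_4_1[OF m_v6 m_q] anti_4_1[OF m_v6 m_v8] Esym[OF f84] anti_4_1[OF m_v7 m_q] anti_4_1[OF m_v7 m_v8] h79 h121 clq[OF m_q m_v8 not_sym[OF n95]]]])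
          qed
        qed
      qed
    next
      case False note h122 = False
      have f123: "\<not> E u b"
      proof
        assume h124: "E u b"
        show False by (rule notE[OF nC4 C4I[OF Esym Eirr n2 neq_0_1[OF m_u m_q] neq_0_1[OF m_u m_b] neq_0_1[OF m_z m_q] neq_0_1[OF m_z m_b] n3 inVB[OF m_u] inVB[OF m_z] inVB[OF m_q] inVB[OF m_b] clq[OF m_u m_z n2] h122 h124 r4 r7 clq[OF m_q m_b n3]]])
      qed
      obtain v8 where m_v8: "v8 \<in> B (cl 4)" and f125: "E x v8" using witA_4[OF m_x] by auto
      show False
      proof (cases "v8 = v6")
        case True
        have f126: "E x v6" using f125 True by simp
        obtain v8 where m_v8: "v8 \<in> B (cl 1)" and f127: "E u v8" using wit_0_1[OF m_u] by auto
        have n128: "v8 \<noteq> q" using f127 h122 by auto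
        have n129: "v8 \<noteq> b" using f127 f123 by auto
        have f130: "E x v8"
        proof (rule ccontr)
          assume h131: "\<not> E x v8"
          show False by (rule notE[OF nC4 C4I[OF Esym Eirr neqAB[OF m_x m_u] neqAB[OF m_x m_v8] neqAB[OF m_x m_b] neq_0_1[OF m_u m_v8] neq_0_1[OF m_u m_b] n129 inVA[OF m_x] inVB[OF m_u] inVB[OF m_v8] inVB[OF m_b] r1 h131 r6 f127 f123 clq[OF m_v8 m_b n129]]])
        qed
        have f132: "E z v8"
        proof (rule ccontr)
          assume h133: "\<not> E z v8"
          show False by (rule notE[OF nC4 C4I[OF Esym Eirr n2 neq_0_1[OF m_u m_q] neq_0_1[OF m_u m_v8] neq_0_1[OF m_z m_q] neq_0_1[OF m_z m_v8] not_sym[OF n128] inVB[OF m_u] inVB[OF m_z] inVB[OF m_q] inVB[OF m_v8] clq[OF m_u m_z n2] h122 f127 r4 h133 clq[OF m_q m_v8 not_sym[OF n128]]]])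
        qed
        have f134: "\<not> E x v7"
        proof
          assume h135: "E x v7"
          show False by (rule notE[OF nC4 C4I[OF Esym Eirr neqAB[OF m_x m_v7] neqAB[OF m_x m_z] neqAB[OF m_x m_v8] neq_4_0[OF m_v7 m_z] neq_4_1[OF m_v7 m_v8] neq_0_1[OF m_z m_v8] inVA[OF m_x] inVB[OF m_v7] inVB[OF m_z] inVB[OF m_v8] h135 r3 f130 Esym[OF f7] anti_4_1[OF m_v7 m_v8] f132]])
        qed
        show False
        proof (cases "E z v6")
          case True note h136 = True
          show False by (rule notE[OF nC4 C4I[OF Esym Eirr neqAB[OF m_x m_v6] neqAB[OF m_x m_z] neqAB[OF m_x m_v8] neq_4_0[OF m_v6 m_z] neq_4_1[OF m_v6 m_v8] neq_0_1[OF m_z m_v8] inVA[OF m_x] inVB[OF m_v6] inVB[OF m_z] inVB[OF m_v8] f126 r3 f130 Esym[OF h136] anti_4_1[OF m_v6 m_v8] f132]])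
        next
          case False note h137 = False
          show False by (rule notE[OF nC6 C6I[OF Esym Eirr neqAB[OF m_x m_b] neqAB[OF m_x m_q] neqAB[OF m_x m_z] neqAB[OF m_x m_v7] neqAB[OF m_x m_v6] not_sym[OF n3] neq_1_0[OF m_b m_z] neq_1_4[OF m_b m_v7] neq_1_4[OF m_b m_v6] neq_1_0[OF m_q m_z] neq_1_4[OF m_q m_v7] neq_1_4[OF m_q m_v6] neq_0_4[OF m_z m_v7] neq_0_4[OF m_z m_v6] n78 inVA[OF m_x] inVB[OF m_b] inVB[OF m_q] inVB[OF m_z] inVB[OF m_v7] inVB[OF m_v6] r6 r5 r3 f134 f126 clq[OF m_b m_q not_sym[OF n3]] nEsym[OF r7] anti_1_4[OF m_b m_v7] anti_1_4[OF m_b m_v6] Esym[OF r4] anti_1_4[OF m_q m_v7] anti_1_4[OF m_q m_v6] f7 h137 clq[OF m_v7 m_v6 n78]]])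
        qed
      next
        case False note n138 = False
        show False
        proof (cases "v8 = v7")
          case True
          have f139: "E x v7" using f125 True by simp
          have f140: "E u v7"
          proof (rule ccontr)
            assume h141: "\<not> E u v7"
            show False by (rule notE[OF nC4 C4I[OF Esym Eirr neqAB[OF m_x m_u] neqAB[OF m_x m_z] neqAB[OF m_x m_v7] n2 neq_0_4[OF m_u m_v7] neq_0_4[OF m_z m_v7] inVA[OF m_x] inVB[OF m_u] inVB[OF m_z] inVB[OF m_v7] r1 r3 f139 clq[OF m_u m_z n2] h141 f7]])
          qed
          obtain v8 where m_v8: "v8 \<in> B (cl 1)" and f142: "E u v8" using wit_0_1[OF m_u] by auto
          have n143: "v8 \<noteq> q" using f142 h122 by auto
          have n144: "v8 \<noteq> b" using f142 f123 by auto
          have f145: "E x v8"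
          proof (rule ccontr)
            assume h146: "\<not> E x v8"
            show False by (rule notE[OF nC4 C4I[OF Esym Eirr neqAB[OF m_x m_u] neqAB[OF m_x m_v8] neqAB[OF m_x m_b] neq_0_1[OF m_u m_v8] neq_0_1[OF m_u m_b] n144 inVA[OF m_x] inVB[OF m_u] inVB[OF m_v8] inVB[OF m_b] r1 h146 r6 f142 f123 clq[OF m_v8 m_b n144]]])
          qed
          show False
          proof (cases "E z v8")
            case True note h147 = True
            show False by (rule notE[OF nC4 C4I[OF Esym Eirr neqAB[OF m_x m_v7] neqAB[OF m_x m_z] neqAB[OF m_x m_v8] neq_4_0[OF m_v7 m_z] neq_4_1[OF m_v7 m_v8] neq_0_1[OF m_z m_v8] inVA[OF m_x] inVB[OF m_v7] inVB[OF m_z] inVB[OF m_v8] f139 r3 f145 Esym[OF f7] anti_4_1[OF m_v7 m_v8] h147]])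
          next
            case False note h148 = False
            show False by (rule notE[OF nC4 C4I[OF Esym Eirr n2 neq_0_1[OF m_u m_q] neq_0_1[OF m_u m_v8] neq_0_1[OF m_z m_q] neq_0_1[OF m_z m_v8] not_sym[OF n143] inVB[OF m_u] inVB[OF m_z] inVB[OF m_q] inVB[OF m_v8] clq[OF m_u m_z n2] h122 f142 r4 h148 clq[OF m_q m_v8 not_sym[OF n143]]]])
          qed
        next
          case False note n149 = False
          obtain v9 where m_v9: "v9 \<in> B (cl 1)" and f150: "E u v9" using wit_0_1[OF m_u] by auto
          have n151: "v9 \<noteq> q" using f150 h122 by auto
          have n152: "v9 \<noteq> b" using f150 f123 by auto
          have f153: "E x v9"
          proof (rule ccontr)
            assume h154: "\<not> E x v9"
            show False by (rule notE[OF nC4 C4I[OF Esym Eirr neqAB[OF m_x m_u] neqAB[OF m_x m_v9] neqAB[OF m_x m_b] neq_0_1[OF m_u m_v9] neq_0_1[OF m_u m_b] n152 inVA[OF m_x] inVB[OF m_u] inVB[OF m_v9] inVB[OF m_b] r1 h154 r6 f150 f123 clq[OF m_v9 m_b n152]]])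
          qed
          have f155: "E z v9"
          proof (rule ccontr)
            assume h156: "\<not> E z v9"
            show False by (rule notE[OF nC4 C4I[OF Esym Eirr n2 neq_0_1[OF m_u m_q] neq_0_1[OF m_u m_v9] neq_0_1[OF m_z m_q] neq_0_1[OF m_z m_v9] not_sym[OF n151] inVB[OF m_u] inVB[OF m_z] inVB[OF m_q] inVB[OF m_v9] clq[OF m_u m_z n2] h122 f150 r4 h156 clq[OF m_q m_v9 not_sym[OF n151]]]])
          qed
          have f157: "\<not> E x v7"
          proof
            assume h158: "E x v7"
            show False by (rule notE[OF nC4 C4I[OF Esym Eirr neqAB[OF m_x m_v7] neqAB[OF m_x m_z] neqAB[OF m_x m_v9] neq_4_0[OF m_v7 m_z] neq_4_1[OF m_v7 m_v9] neq_0_1[OF m_z m_v9] inVA[OF m_x] inVB[OF m_v7] inVB[OF m_z] inVB[OF m_v9] h158 r3 f153 Esym[OF f7] anti_4_1[OF m_v7 m_v9] f155]])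
          qed
          show False
          proof (cases "E z v8")
            case True note h159 = True
            show False by (rule notE[OF nC4 C4I[OF Esym Eirr neqAB[OF m_x m_v8] neqAB[OF m_x m_z] neqAB[OF m_x m_v9] neq_4_0[OF m_v8 m_z] neq_4_1[OF m_v8 m_v9] neq_0_1[OF m_z m_v9] inVA[OF m_x] inVB[OF m_v8] inVB[OF m_z] inVB[OF m_v9] f125 r3 f153 Esym[OF h159] anti_4_1[OF m_v8 m_v9] f155]])
          next
            case False note h160 = False
            show False by (rule notE[OF nC6 C6I[OF Esym Eirr neqAB[OF m_x m_b] neqAB[OF m_x m_q] neqAB[OF m_x m_z] neqAB[OF m_x m_v7] neqAB[OF m_x m_v8] not_sym[OF n3] neq_1_0[OF m_b m_z] neq_1_4[OF m_b m_v7] neq_1_4[OF m_b m_v8] neq_1_0[OF m_q m_z] neq_1_4[OF m_q m_v7] neq_1_4[OF m_q m_v8] neq_0_4[OF m_z m_v7] neq_0_4[OF m_z m_v8] not_sym[OF n149] inVA[OF m_x] inVB[OF m_b] inVB[OF m_q] inVB[OF m_z] inVB[OF m_v7] inVB[OF m_v8] r6 r5 r3 f157 f125 clq[OF m_b m_q not_sym[OF n3]] nEsym[OF r7] anti_1_4[OF m_b m_v7] anti_1_4[OF m_b m_v8] Esym[OF r4] anti_1_4[OF m_q m_v7] anti_1_4[OF m_q m_v8] f7 h160 clq[OF m_v7 m_v8 not_sym[OF n149]]]])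
          qed
        qed
      qed
    qed
  qed
qed

lemma K4:
  assumes m_x: "x \<in> A3 V E B i"
    and m_y: "y \<in> A3 V E B i"
    and m_u: "u \<in> B (cl 0)"
    and m_z: "z \<in> B (cl 0)"
    and m_q: "q \<in> B (cl 4)"
    and m_b: "b \<in> B (cl 4)"
    and r0: "E x y"
    and r1: "E x u"
    and r2: "\<not> E y u"
    and r3: "\<not> E x z"
    and r4: "E z q"
    and r5: "\<not> E x q"
    and r6: "E x b"
    and r7: "\<not> E z b"
  shows False
proof -
  have n1: "x \<noteq> y" using r0 Eirr by blast
  have n2: "u \<noteq> z" using r1 r3 by auto
  have n3: "q \<noteq> b" using r5 r6 by auto
  have f4: "\<not> E y z"
  proof
    assume h5: "E y z"
    show False by (rule notE[OF nC4 C4I[OF Esym Eirr n1 neqAB[OF m_x m_z] neqAB[OF m_x m_u] neqAB[OF m_y m_z] neqAB[OF m_y m_u] not_sym[OF n2] inVA[OF m_x] inVA[OF m_y] inVB[OF m_z] inVB[OF m_u] r0 r3 r1 h5 r2 clq[OF m_z m_u not_sym[OF n2]]]])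
  qed
  obtain v6 where m_v6: "v6 \<in> B (cl 4)" and f6: "E y v6" using witA_4[OF m_y] by auto
  show False
  proof (cases "v6 = q")
    case True
    have f7: "E y q" using f6 True by simp
    have f8: "E y b"
    proof (rule ccontr)
      assume h9: "\<not> E y b"
      show False by (rule notE[OF nC4 C4I[OF Esym Eirr n1 neqAB[OF m_x m_q] neqAB[OF m_x m_b] neqAB[OF m_y m_q] neqAB[OF m_y m_b] n3 inVA[OF m_x] inVA[OF m_y] inVB[OF m_q] inVB[OF m_b] r0 r5 r6 f7 h9 clq[OF m_q m_b n3]]])
    qed
    have f10: "\<not> E u q"
    proof
      assume h11: "E u q"
      show False by (rule notE[OF nC4 C4I[OF Esym Eirr n1 neqAB[OF m_x m_q] neqAB[OF m_x m_u] neqAB[OF m_y m_q] neqAB[OF m_y m_u] neq_4_0[OF m_q m_u] inVA[OF m_x] inVA[OF m_y] inVB[OF m_q] inVB[OF m_u] r0 r5 r1 f7 r2 Esym[OF h11]]])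
    qed
    have f12: "\<not> E u b"
    proof
      assume h13: "E u b"
      show False by (rule notE[OF nC4 C4I[OF Esym Eirr n2 neq_0_4[OF m_u m_q] neq_0_4[OF m_u m_b] neq_0_4[OF m_z m_q] neq_0_4[OF m_z m_b] n3 inVB[OF m_u] inVB[OF m_z] inVB[OF m_q] inVB[OF m_b] clq[OF m_u m_z n2] f10 h13 r4 r7 clq[OF m_q m_b n3]]])
    qed
    obtain v6 where m_v6: "v6 \<in> B (cl 1)" and f14: "E x v6" using witA_1[OF m_x] by auto
    obtain v7 where m_v7: "v7 \<in> B (cl 0)" and f15: "E y v7" using witA_0[OF m_y] by auto
    have n16: "v7 \<noteq> u" using f15 r2 by auto
    have n17: "v7 \<noteq> z" using f15 f4 by auto
    have f18: "E x v7"
    proof (rule ccontr)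
      assume h19: "\<not> E x v7"
      show False by (rule notE[OF nC4 C4I[OF Esym Eirr n1 neqAB[OF m_x m_v7] neqAB[OF m_x m_u] neqAB[OF m_y m_v7] neqAB[OF m_y m_u] n16 inVA[OF m_x] inVA[OF m_y] inVB[OF m_v7] inVB[OF m_u] r0 h19 r1 f15 r2 clq[OF m_v7 m_u n16]]])
    qed
    have f20: "E q v7"
    proof (rule ccontr)
      assume h21: "\<not> E q v7"
      show False by (rule notE[OF nC4 C4I[OF Esym Eirr neqAB[OF m_y m_q] neqAB[OF m_y m_z] neqAB[OF m_y m_v7] neq_4_0[OF m_q m_z] neq_4_0[OF m_q m_v7] not_sym[OF n17] inVA[OF m_y] inVB[OF m_q] inVB[OF m_z] inVB[OF m_v7] f7 f4 f15 Esym[OF r4] h21 clq[OF m_z m_v7 not_sym[OF n17]]]])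
    qed
    have f22: "E b v7"
    proof (rule ccontr)
      assume h23: "\<not> E b v7"
      show False by (rule notE[OF nC4 C4I[OF Esym Eirr neqAB[OF m_x m_b] neqAB[OF m_x m_q] neqAB[OF m_x m_v7] not_sym[OF n3] neq_4_0[OF m_b m_v7] neq_4_0[OF m_q m_v7] inVA[OF m_x] inVB[OF m_b] inVB[OF m_q] inVB[OF m_v7] r6 r5 f18 clq[OF m_b m_q not_sym[OF n3]] h23 f20]])
    qed
    obtain v8 where m_v8: "v8 \<in> B (cl 4)" and f24: "E u v8" using wit_0_4[OF m_u] by auto
    have n25: "v8 \<noteq> q" using f24 f10 by auto
    have n26: "v8 \<noteq> b" using f24 f12 by auto
    have f27: "E x v8"
    proof (rule ccontr)
      assume h28: "\<not> E x v8"
      show False by (rule notE[OF nC4 C4I[OF Esym Eirr neqAB[OF m_x m_u] neqAB[OF m_x m_v8] neqAB[OF m_x m_b] neq_0_4[OF m_u m_v8] neq_0_4[OF m_u m_b] n26 inVA[OF m_x] inVB[OF m_u] inVB[OF m_v8] inVB[OF m_b] r1 h28 r6 f24 f12 clq[OF m_v8 m_b n26]]])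
    qed
    have f29: "E y v8"
    proof (rule ccontr)
      assume h30: "\<not> E y v8"
      show False by (rule notE[OF nC4 C4I[OF Esym Eirr n1 neqAB[OF m_x m_q] neqAB[OF m_x m_v8] neqAB[OF m_y m_q] neqAB[OF m_y m_v8] not_sym[OF n25] inVA[OF m_x] inVA[OF m_y] inVB[OF m_q] inVB[OF m_v8] r0 r5 f27 f7 h30 clq[OF m_q m_v8 not_sym[OF n25]]]])
    qed
    have f31: "E z v8"
    proof (rule ccontr)
      assume h32: "\<not> E z v8"
      show False by (rule notE[OF nC4 C4I[OF Esym Eirr n2 neq_0_4[OF m_u m_q] neq_0_4[OF m_u m_v8] neq_0_4[OF m_z m_q] neq_0_4[OF m_z m_v8] not_sym[OF n25] inVB[OF m_u] inVB[OF m_z] inVB[OF m_q] inVB[OF m_v8] clq[OF m_u m_z n2] f10 f24 r4 h32 clq[OF m_q m_v8 not_sym[OF n25]]]])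
    qed
    have f33: "E v7 v8"
    proof (rule ccontr)
      assume h34: "\<not> E v7 v8"
      show False by (rule notE[OF nC4 C4I[OF Esym Eirr neqAB[OF m_x m_v7] neqAB[OF m_x m_z] neqAB[OF m_x m_v8] n17 neq_0_4[OF m_v7 m_v8] neq_0_4[OF m_z m_v8] inVA[OF m_x] inVB[OF m_v7] inVB[OF m_z] inVB[OF m_v8] f18 r3 f27 clq[OF m_v7 m_z n17] h34 f31]])
    qed
    have f35: "\<not> E z v6"
    proof
      assume h36: "E z v6"
      show False by (rule notE[OF nC4 C4I[OF Esym Eirr neqAB[OF m_x m_v6] neqAB[OF m_x m_z] neqAB[OF m_x m_v8] neq_1_0[OF m_v6 m_z] neq_1_4[OF m_v6 m_v8] neq_0_4[OF m_z m_v8] inVA[OF m_x] inVB[OF m_v6] inVB[OF m_z] inVB[OF m_v8] f14 r3 f27 Esym[OF h36] anti_1_4[OF m_v6 m_v8] f31]])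
    qed
    have f37: "\<not> E u v6"
    proof
      assume h38: "E u v6"
      show False by (rule nice_4[OF m_q m_z m_u m_v6 not_sym[OF n2] Esym[OF r4] h38 nEsym[OF f10] f35])
    qed
    obtain v9 where m_v9: "v9 \<in> B (cl 1)" and f39: "E u v9" using wit_0_1[OF m_u] by auto
    have n40: "v9 \<noteq> v6" using f39 f37 by auto
    have f41: "E x v9"
    proof (rule ccontr)
      assume h42: "\<not> E x v9"
      show False by (rule notE[OF nC4 C4I[OF Esym Eirr neqAB[OF m_x m_u] neqAB[OF m_x m_v9] neqAB[OF m_x m_v6] neq_0_1[OF m_u m_v9] neq_0_1[OF m_u m_v6] n40 inVA[OF m_x] inVB[OF m_u] inVB[OF m_v9] inVB[OF m_v6] r1 h42 f14 f39 f37 clq[OF m_v9 m_v6 n40]]])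
    qed
    have f43: "\<not> E y v9"
    proof
      assume h44: "E y v9"
      show False by (rule notE[OF nC4 C4I[OF Esym Eirr neqAB[OF m_y m_v8] neqAB[OF m_y m_u] neqAB[OF m_y m_v9] neq_4_0[OF m_v8 m_u] neq_4_1[OF m_v8 m_v9] neq_0_1[OF m_u m_v9] inVA[OF m_y] inVB[OF m_v8] inVB[OF m_u] inVB[OF m_v9] f29 r2 h44 Esym[OF f24] anti_4_1[OF m_v8 m_v9] f39]])
    qed
    show False
    proof (cases "E z v9")
      case True note h45 = True
      show False by (rule notE[OF nC4 C4I[OF Esym Eirr neqAB[OF m_x m_v8] neqAB[OF m_x m_z] neqAB[OF m_x m_v9] neq_4_0[OF m_v8 m_z] neq_4_1[OF m_v8 m_v9] neq_0_1[OF m_z m_v9] inVA[OF m_x] inVB[OF m_v8] inVB[OF m_z] inVB[OF m_v9] f27 r3 f41 Esym[OF f31] anti_4_1[OF m_v8 m_v9] h45]])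
    next
      case False note h46 = False
      show False by (rule nice_4[OF m_q m_z m_u m_v9 not_sym[OF n2] Esym[OF r4] f39 nEsym[OF f10] h46])
    qed
  next
    case False note n47 = False
    show False
    proof (cases "v6 = b")
      case True
      have f48: "E y b" using f6 True by simp
      obtain v6 where m_v6: "v6 \<in> B (cl 1)" and f49: "E x v6" using witA_1[OF m_x] by auto
      obtain v7 where m_v7: "v7 \<in> B (cl 1)" and f50: "E z v7" using wit_0_1[OF m_z] by auto
      show False
      proof (cases "v7 = v6")
        case True
        have f51: "E z v6" using f50 True by simp
        have f52: "E u v6"
        proof (rule ccontr)
          assume h53: "\<not> E u v6"
          show False by (rule notE[OF nC4 C4I[OF Esym Eirr neqAB[OF m_x m_u] neqAB[OF m_x m_z] neqAB[OF m_x m_v6] n2 neq_0_1[OF m_u m_v6] neq_0_1[OF m_z m_v6] inVA[OF m_x] inVB[OF m_u] inVB[OF m_z] inVB[OF m_v6] r1 r3 f49 clq[OF m_u m_z n2] h53 f51]])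
        qed
        show False
        proof (cases "E u q")
          case True note h54 = True
          have f55: "\<not> E y q"
          proof
            assume h56: "E y q"
            show False by (rule notE[OF nC4 C4I[OF Esym Eirr n1 neqAB[OF m_x m_q] neqAB[OF m_x m_u] neqAB[OF m_y m_q] neqAB[OF m_y m_u] neq_4_0[OF m_q m_u] inVA[OF m_x] inVA[OF m_y] inVB[OF m_q] inVB[OF m_u] r0 r5 r1 h56 r2 Esym[OF h54]]])
          qed
          have f57: "E u b"
          proof (rule ccontr)
            assume h58: "\<not> E u b"
            show False by (rule notE[OF nC4 C4I[OF Esym Eirr neqAB[OF m_x m_u] neqAB[OF m_x m_q] neqAB[OF m_x m_b] neq_0_4[OF m_u m_q] neq_0_4[OF m_u m_b] n3 inVA[OF m_x] inVB[OF m_u] inVB[OF m_q] inVB[OF m_b] r1 r5 r6 h54 h58 clq[OF m_q m_b n3]]])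
          qed
          have f59: "\<not> E y v6"
          proof
            assume h60: "E y v6"
            show False by (rule notE[OF nC4 C4I[OF Esym Eirr neqAB[OF m_y m_b] neqAB[OF m_y m_u] neqAB[OF m_y m_v6] neq_4_0[OF m_b m_u] neq_4_1[OF m_b m_v6] neq_0_1[OF m_u m_v6] inVA[OF m_y] inVB[OF m_b] inVB[OF m_u] inVB[OF m_v6] f48 r2 h60 Esym[OF f57] anti_4_1[OF m_b m_v6] f52]])
          qed
          obtain v7 where m_v7: "v7 \<in> B (cl 1)" and f61: "E y v7" using witA_1[OF m_y] by auto
          have n62: "v7 \<noteq> v6" using f61 f59 by auto
          have f63: "E x v7"
          proof (rule ccontr)
            assume h64: "\<not> E x v7"
            show False by (rule notE[OF nC4 C4I[OF Esym Eirr n1 neqAB[OF m_x m_v7] neqAB[OF m_x m_v6] neqAB[OF m_y m_v7] neqAB[OF m_y m_v6] n62 inVA[OF m_x] inVA[OF m_y] inVB[OF m_v7] inVB[OF m_v6] r0 h64 f49 f61 f59 clq[OF m_v7 m_v6 n62]]])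
          qed
          have f65: "\<not> E u v7"
          proof
            assume h66: "E u v7"
            show False by (rule notE[OF nC4 C4I[OF Esym Eirr neqAB[OF m_y m_b] neqAB[OF m_y m_u] neqAB[OF m_y m_v7] neq_4_0[OF m_b m_u] neq_4_1[OF m_b m_v7] neq_0_1[OF m_u m_v7] inVA[OF m_y] inVB[OF m_b] inVB[OF m_u] inVB[OF m_v7] f48 r2 f61 Esym[OF f57] anti_4_1[OF m_b m_v7] h66]])
          qed
          show False
          proof (cases "E z v7")
            case True note h67 = True
            show False by (rule notE[OF nC4 C4I[OF Esym Eirr neqAB[OF m_x m_u] neqAB[OF m_x m_z] neqAB[OF m_x m_v7] n2 neq_0_1[OF m_u m_v7] neq_0_1[OF m_z m_v7] inVA[OF m_x] inVB[OF m_u] inVB[OF m_z] inVB[OF m_v7] r1 r3 f63 clq[OF m_u m_z n2] f65 h67]])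
          next
            case False note h68 = False
            show False by (rule notE[OF nC6 C6I[OF Esym Eirr neqAB[OF m_y m_b] neqAB[OF m_y m_q] neqAB[OF m_y m_z] neqAB[OF m_y m_v6] neqAB[OF m_y m_v7] not_sym[OF n3] neq_4_0[OF m_b m_z] neq_4_1[OF m_b m_v6] neq_4_1[OF m_b m_v7] neq_4_0[OF m_q m_z] neq_4_1[OF m_q m_v6] neq_4_1[OF m_q m_v7] neq_0_1[OF m_z m_v6] neq_0_1[OF m_z m_v7] not_sym[OF n62] inVA[OF m_y] inVB[OF m_b] inVB[OF m_q] inVB[OF m_z] inVB[OF m_v6] inVB[OF m_v7] f48 f55 f4 f59 f61 clq[OF m_b m_q not_sym[OF n3]] nEsym[OF r7] anti_4_1[OF m_b m_v6] anti_4_1[OF m_b m_v7] Esym[OF r4] anti_4_1[OF m_q m_v6] anti_4_1[OF m_q m_v7] f51 h68 clq[OF m_v6 m_v7 not_sym[OF n62]]]])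
          qed
        next
          case False note h69 = False
          have f70: "\<not> E u b"
          proof
            assume h71: "E u b"
            show False by (rule notE[OF nC4 C4I[OF Esym Eirr n2 neq_0_4[OF m_u m_q] neq_0_4[OF m_u m_b] neq_0_4[OF m_z m_q] neq_0_4[OF m_z m_b] n3 inVB[OF m_u] inVB[OF m_z] inVB[OF m_q] inVB[OF m_b] clq[OF m_u m_z n2] h69 h71 r4 r7 clq[OF m_q m_b n3]]])
          qed
          obtain v7 where m_v7: "v7 \<in> B (cl 4)" and f72: "E u v7" using wit_0_4[OF m_u] by auto
          have n73: "v7 \<noteq> q" using f72 h69 by auto
          have n74: "v7 \<noteq> b" using f72 f70 by auto
          have f75: "E x v7"
          proof (rule ccontr)
            assume h76: "\<not> E x v7"
            show False by (rule notE[OF nC4 C4I[OF Esym Eirr neqAB[OF m_x m_u] neqAB[OF m_x m_v7] neqAB[OF m_x m_b] neq_0_4[OF m_u m_v7] neq_0_4[OF m_u m_b] n74 inVA[OF m_x] inVB[OF m_u] inVB[OF m_v7] inVB[OF m_b] r1 h76 r6 f72 f70 clq[OF m_v7 m_b n74]]])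
          qed
          show False
          proof (cases "E z v7")
            case True note h77 = True
            show False by (rule notE[OF nC4 C4I[OF Esym Eirr neqAB[OF m_x m_v6] neqAB[OF m_x m_z] neqAB[OF m_x m_v7] neq_1_0[OF m_v6 m_z] neq_1_4[OF m_v6 m_v7] neq_0_4[OF m_z m_v7] inVA[OF m_x] inVB[OF m_v6] inVB[OF m_z] inVB[OF m_v7] f49 r3 f75 Esym[OF f51] anti_1_4[OF m_v6 m_v7] h77]])
          next
            case False note h78 = False
            show False by (rule notE[OF nC4 C4I[OF Esym Eirr n2 neq_0_4[OF m_u m_q] neq_0_4[OF m_u m_v7] neq_0_4[OF m_z m_q] neq_0_4[OF m_z m_v7] not_sym[OF n73] inVB[OF m_u] inVB[OF m_z] inVB[OF m_q] inVB[OF m_v7] clq[OF m_u m_z n2] h69 f72 r4 h78 clq[OF m_q m_v7 not_sym[OF n73]]]])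
          qed
        qed
      next
        case False note n79 = False
        show False
        proof (cases "E u q")
          case True note h80 = True
          have f81: "\<not> E y q"
          proof
            assume h82: "E y q"
            show False by (rule notE[OF nC4 C4I[OF Esym Eirr n1 neqAB[OF m_x m_q] neqAB[OF m_x m_u] neqAB[OF m_y m_q] neqAB[OF m_y m_u] neq_4_0[OF m_q m_u] inVA[OF m_x] inVA[OF m_y] inVB[OF m_q] inVB[OF m_u] r0 r5 r1 h82 r2 Esym[OF h80]]])
          qed
          have f83: "E u b"
          proof (rule ccontr)
            assume h84: "\<not> E u b"
            show False by (rule notE[OF nC4 C4I[OF Esym Eirr neqAB[OF m_x m_u] neqAB[OF m_x m_q] neqAB[OF m_x m_b] neq_0_4[OF m_u m_q] neq_0_4[OF m_u m_b] n3 inVA[OF m_x] inVB[OF m_u] inVB[OF m_q] inVB[OF m_b] r1 r5 r6 h80 h84 clq[OF m_q m_b n3]]])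
          qed
          have f85: "E u v7"
          proof (rule ccontr)
            assume h86: "\<not> E u v7"
            show False by (rule nice_4[OF m_b m_u m_z m_v7 n2 Esym[OF f83] f50 nEsym[OF r7] h86])
          qed
          have f87: "\<not> E y v7"
          proof
            assume h88: "E y v7"
            show False by (rule notE[OF nC4 C4I[OF Esym Eirr neqAB[OF m_y m_b] neqAB[OF m_y m_u] neqAB[OF m_y m_v7] neq_4_0[OF m_b m_u] neq_4_1[OF m_b m_v7] neq_0_1[OF m_u m_v7] inVA[OF m_y] inVB[OF m_b] inVB[OF m_u] inVB[OF m_v7] f48 r2 h88 Esym[OF f83] anti_4_1[OF m_b m_v7] f85]])
          qed
          obtain v8 where m_v8: "v8 \<in> B (cl 1)" and f89: "E y v8" using witA_1[OF m_y] by auto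
          show False
          proof (cases "v8 = v6")
            case True
            have f90: "E y v6" using f89 True by simp
            have f91: "\<not> E u v6"
            proof
              assume h92: "E u v6"
              show False by (rule notE[OF nC4 C4I[OF Esym Eirr neqAB[OF m_y m_b] neqAB[OF m_y m_u] neqAB[OF m_y m_v6] neq_4_0[OF m_b m_u] neq_4_1[OF m_b m_v6] neq_0_1[OF m_u m_v6] inVA[OF m_y] inVB[OF m_b] inVB[OF m_u] inVB[OF m_v6] f48 r2 f90 Esym[OF f83] anti_4_1[OF m_b m_v6] h92]])
            qed
            show False
            proof (cases "E z v6")
              case True note h93 = True
              show False by (rule notE[OF nC4 C4I[OF Esym Eirr neqAB[OF m_x m_u] neqAB[OF m_x m_z] neqAB[OF m_x m_v6] n2 neq_0_1[OF m_u m_v6] neq_0_1[OF m_z m_v6] inVA[OF m_x] inVB[OF m_u] inVB[OF m_z] inVB[OF m_v6] r1 r3 f49 clq[OF m_u m_z n2] f91 h93]])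
            next
              case False note h94 = False
              show False by (rule notE[OF nC6 C6I[OF Esym Eirr neqAB[OF m_y m_b] neqAB[OF m_y m_q] neqAB[OF m_y m_z] neqAB[OF m_y m_v7] neqAB[OF m_y m_v6] not_sym[OF n3] neq_4_0[OF m_b m_z] neq_4_1[OF m_b m_v7] neq_4_1[OF m_b m_v6] neq_4_0[OF m_q m_z] neq_4_1[OF m_q m_v7] neq_4_1[OF m_q m_v6] neq_0_1[OF m_z m_v7] neq_0_1[OF m_z m_v6] n79 inVA[OF m_y] inVB[OF m_b] inVB[OF m_q] inVB[OF m_z] inVB[OF m_v7] inVB[OF m_v6] f48 f81 f4 f87 f90 clq[OF m_b m_q not_sym[OF n3]] nEsym[OF r7] anti_4_1[OF m_b m_v7] anti_4_1[OF m_b m_v6] Esym[OF r4] anti_4_1[OF m_q m_v7] anti_4_1[OF m_q m_v6] f50 h94 clq[OF m_v7 m_v6 n79]]])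
            qed
          next
            case False note n95 = False
            have n96: "v8 \<noteq> v7" using f89 f87 by auto
            have f97: "\<not> E u v8"
            proof
              assume h98: "E u v8"
              show False by (rule notE[OF nC4 C4I[OF Esym Eirr neqAB[OF m_y m_b] neqAB[OF m_y m_u] neqAB[OF m_y m_v8] neq_4_0[OF m_b m_u] neq_4_1[OF m_b m_v8] neq_0_1[OF m_u m_v8] inVA[OF m_y] inVB[OF m_b] inVB[OF m_u] inVB[OF m_v8] f48 r2 f89 Esym[OF f83] anti_4_1[OF m_b m_v8] h98]])
            qed
            show False
            proof (cases "E z v8")
              case True note h99 = True
              show False by (rule nice_4[OF m_b m_u m_z m_v8 n2 Esym[OF f83] h99 nEsym[OF r7] f97])
            next
              case False note h100 = False
              show False by (rule notE[OF nC6 C6I[OF Esym Eirr neqAB[OF m_y m_b] neqAB[OF m_y m_q] neqAB[OF m_y m_z] neqAB[OF m_y m_v7] neqAB[OF m_y m_v8] not_sym[OF n3] neq_4_0[OF m_b m_z] neq_4_1[OF m_b m_v7] neq_4_1[OF m_b m_v8] neq_4_0[OF m_q m_z] neq_4_1[OF m_q m_v7] neq_4_1[OF m_q m_v8] neq_0_1[OF m_z m_v7] neq_0_1[OF m_z m_v8] not_sym[OF n96] inVA[OF m_y] inVB[OF m_b] inVB[OF m_q] inVB[OF m_z] inVB[OF m_v7] inVB[OF m_v8] f48 f81 f4 f87 f89 clq[OF m_b m_q not_sym[OF n3]] nEsym[OF r7] anti_4_1[OF m_b m_v7] anti_4_1[OF m_b m_v8] Esym[OF r4] anti_4_1[OF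 m_q m_v7] anti_4_1[OF m_q m_v8] f50 h100 clq[OF m_v7 m_v8 not_sym[OF n96]]]])
            qed
          qed
        next
          case False note h101 = False
          have f102: "\<not> E u b"
          proof
            assume h103: "E u b"
            show False by (rule notE[OF nC4 C4I[OF Esym Eirr n2 neq_0_4[OF m_u m_q] neq_0_4[OF m_u m_b] neq_0_4[OF m_z m_q] neq_0_4[OF m_z m_b] n3 inVB[OF m_u] inVB[OF m_z] inVB[OF m_q] inVB[OF m_b] clq[OF m_u m_z n2] h101 h103 r4 r7 clq[OF m_q m_b n3]]])
          qed
          obtain v8 where m_v8: "v8 \<in> B (cl 4)" and f104: "E u v8" using wit_0_4[OF m_u] by auto
          have n105: "v8 \<noteq> q" using f104 h101 by auto
          have n106: "v8 \<noteq> b" using f104 f102 by auto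
          have f107: "E x v8"
          proof (rule ccontr)
            assume h108: "\<not> E x v8"
            show False by (rule notE[OF nC4 C4I[OF Esym Eirr neqAB[OF m_x m_u] neqAB[OF m_x m_v8] neqAB[OF m_x m_b] neq_0_4[OF m_u m_v8] neq_0_4[OF m_u m_b] n106 inVA[OF m_x] inVB[OF m_u] inVB[OF m_v8] inVB[OF m_b] r1 h108 r6 f104 f102 clq[OF m_v8 m_b n106]]])
          qed
          have f109: "E z v8"
          proof (rule ccontr)
            assume h110: "\<not> E z v8"
            show False by (rule notE[OF nC4 C4I[OF Esym Eirr n2 neq_0_4[OF m_u m_q] neq_0_4[OF m_u m_v8] neq_0_4[OF m_z m_q] neq_0_4[OF m_z m_v8] not_sym[OF n105] inVB[OF m_u] inVB[OF m_z] inVB[OF m_q] inVB[OF m_v8] clq[OF m_u m_z n2] h101 f104 r4 h110 clq[OF m_q m_v8 not_sym[OF n105]]]])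
          qed
          have f111: "\<not> E x v7"
          proof
            assume h112: "E x v7"
            show False by (rule notE[OF nC4 C4I[OF Esym Eirr neqAB[OF m_x m_v7] neqAB[OF m_x m_z] neqAB[OF m_x m_v8] neq_1_0[OF m_v7 m_z] neq_1_4[OF m_v7 m_v8] neq_0_4[OF m_z m_v8] inVA[OF m_x] inVB[OF m_v7] inVB[OF m_z] inVB[OF m_v8] h112 r3 f107 Esym[OF f50] anti_1_4[OF m_v7 m_v8] f109]])
          qed
          show False
          proof (cases "E z v6")
            case True note h113 = True
            show False by (rule notE[OF nC4 C4I[OF Esym Eirr neqAB[OF m_x m_v6] neqAB[OF m_x m_z] neqAB[OF m_x m_v8] neq_1_0[OF m_v6 m_z] neq_1_4[OF m_v6 m_v8] neq_0_4[OF m_z m_v8] inVA[OF m_x] inVB[OF m_v6] inVB[OF m_z] inVB[OF m_v8] f49 r3 f107 Esym[OF h113] anti_1_4[OF m_v6 m_v8] f109]])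
          next
            case False note h114 = False
            show False by (rule notE[OF nC6 C6I[OF Esym Eirr neqAB[OF m_x m_b] neqAB[OF m_x m_q] neqAB[OF m_x m_z] neqAB[OF m_x m_v7] neqAB[OF m_x m_v6] not_sym[OF n3] neq_4_0[OF m_b m_z] neq_4_1[OF m_b m_v7] neq_4_1[OF m_b m_v6] neq_4_0[OF m_q m_z] neq_4_1[OF m_q m_v7] neq_4_1[OF m_q m_v6] neq_0_1[OF m_z m_v7] neq_0_1[OF m_z m_v6] n79 inVA[OF m_x] inVB[OF m_b] inVB[OF m_q] inVB[OF m_z] inVB[OF m_v7] inVB[OF m_v6] r6 r5 r3 f111 f49 clq[OF m_b m_q not_sym[OF n3]] nEsym[OF r7] anti_4_1[OF m_b m_v7] anti_4_1[OF m_b m_v6] Esym[OF r4] anti_4_1[OF m_q m_v7] anti_4_1[OF m_q m_v6] f50 h114 clq[OF m_v7 m_v6 n79]]])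
          qed
        qed
      qed
    next
      case False note n115 = False
      obtain v7 where m_v7: "v7 \<in> B (cl 1)" and f116: "E z v7" using wit_0_1[OF m_z] by auto
      show False
      proof (cases "E u q")
        case True note h117 = True
        have f118: "\<not> E y q"
        proof
          assume h119: "E y q"
          show False by (rule notE[OF nC4 C4I[OF Esym Eirr n1 neqAB[OF m_x m_q] neqAB[OF m_x m_u] neqAB[OF m_y m_q] neqAB[OF m_y m_u] neq_4_0[OF m_q m_u] inVA[OF m_x] inVA[OF m_y] inVB[OF m_q] inVB[OF m_u] r0 r5 r1 h119 r2 Esym[OF h117]]])
        qed
        have f120: "E u b"
        proof (rule ccontr)
          assume h121: "\<not> E u b"
          show False by (rule notE[OF nC4 C4I[OF Esym Eirr neqAB[OF m_x m_u] neqAB[OF m_x m_q] neqAB[OF m_x m_b] neq_0_4[OF m_u m_q] neq_0_4[OF m_u m_b] n3 inVA[OF m_x] inVB[OF m_u] inVB[OF m_q] inVB[OF m_b] r1 r5 r6 h117 h121 clq[OF m_q m_b n3]]])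
        qed
        have f122: "E u v7"
        proof (rule ccontr)
          assume h123: "\<not> E u v7"
          show False by (rule nice_4[OF m_b m_u m_z m_v7 n2 Esym[OF f120] f116 nEsym[OF r7] h123])
        qed
        obtain v8 where m_v8: "v8 \<in> B (cl 1)" and f124: "E y v8" using witA_1[OF m_y] by auto
        show False
        proof (cases "v8 = v7")
          case True
          have f125: "E y v7" using f124 True by simp
          have f126: "E x v7"
          proof (rule ccontr)
            assume h127: "\<not> E x v7"
            show False by (rule notE[OF nC4 C4I[OF Esym Eirr n1 neqAB[OF m_x m_v7] neqAB[OF m_x m_u] neqAB[OF m_y m_v7] neqAB[OF m_y m_u] neq_1_0[OF m_v7 m_u] inVA[OF m_x] inVA[OF m_y] inVB[OF m_v7] inVB[OF m_u] r0 h127 r1 f125 r2 Esym[OF f122]]])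
          qed
          have f128: "\<not> E y b"
          proof
            assume h129: "E y b"
            show False by (rule notE[OF nC4 C4I[OF Esym Eirr neqAB[OF m_y m_b] neqAB[OF m_y m_u] neqAB[OF m_y m_v7] neq_4_0[OF m_b m_u] neq_4_1[OF m_b m_v7] neq_0_1[OF m_u m_v7] inVA[OF m_y] inVB[OF m_b] inVB[OF m_u] inVB[OF m_v7] h129 r2 f125 Esym[OF f120] anti_4_1[OF m_b m_v7] f122]])
          qed
          have f130: "\<not> E u v6"
          proof
            assume h131: "E u v6"
            show False by (rule notE[OF nC4 C4I[OF Esym Eirr neqAB[OF m_y m_v6] neqAB[OF m_y m_u] neqAB[OF m_y m_v7] neq_4_0[OF m_v6 m_u] neq_4_1[OF m_v6 m_v7] neq_0_1[OF m_u m_v7] inVA[OF m_y] inVB[OF m_v6] inVB[OF m_u] inVB[OF m_v7] f6 r2 f125 Esym[OF h131] anti_4_1[OF m_v6 m_v7] f122]])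
          qed
          have f132: "\<not> E z v6"
          proof
            assume h133: "E z v6"
            show False by (rule notE[OF nC4 C4I[OF Esym Eirr neqAB[OF m_y m_v6] neqAB[OF m_y m_z] neqAB[OF m_y m_v7] neq_4_0[OF m_v6 m_z] neq_4_1[OF m_v6 m_v7] neq_0_1[OF m_z m_v7] inVA[OF m_y] inVB[OF m_v6] inVB[OF m_z] inVB[OF m_v7] f6 f4 f125 Esym[OF h133] anti_4_1[OF m_v6 m_v7] f116]])
          qed
          show False
          proof (cases "E x v6")
            case True note h134 = True
            show False by (rule notE[OF nC4 C4I[OF Esym Eirr neqAB[OF m_x m_u] neqAB[OF m_x m_q] neqAB[OF m_x m_v6] neq_0_4[OF m_u m_q] neq_0_4[OF m_u m_v6] not_sym[OF n47] inVA[OF m_x] inVB[OF m_u] inVB[OF m_q] inVB[OF m_v6] r1 r5 h134 h117 f130 clq[OF m_q m_v6 not_sym[OF n47]]]])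
          next
            case False note h135 = False
            show False by (rule notE[OF nC4 C4I[OF Esym Eirr n1 neqAB[OF m_x m_v6] neqAB[OF m_x m_b] neqAB[OF m_y m_v6] neqAB[OF m_y m_b] n115 inVA[OF m_x] inVA[OF m_y] inVB[OF m_v6] inVB[OF m_b] r0 h135 r6 f6 f128 clq[OF m_v6 m_b n115]]])
          qed
        next
          case False note n136 = False
          show False
          proof (cases "E x v6")
            case True note h137 = True
            have f138: "E u v6"
            proof (rule ccontr)
              assume h139: "\<not> E u v6"
              show False by (rule notE[OF nC4 C4I[OF Esym Eirr neqAB[OF m_x m_u] neqAB[OF m_x m_q] neqAB[OF m_x m_v6] neq_0_4[OF m_u m_q] neq_0_4[OF m_u m_v6] not_sym[OF n47] inVA[OF m_x] inVB[OF m_u] inVB[OF m_q] inVB[OF m_v6] r1 r5 h137 h117 h139 clq[OF m_q m_v6 not_sym[OF n47]]]])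
            qed
            have f140: "\<not> E u v8"
            proof
              assume h141: "E u v8"
              show False by (rule notE[OF nC4 C4I[OF Esym Eirr neqAB[OF m_y m_v6] neqAB[OF m_y m_u] neqAB[OF m_y m_v8] neq_4_0[OF m_v6 m_u] neq_4_1[OF m_v6 m_v8] neq_0_1[OF m_u m_v8] inVA[OF m_y] inVB[OF m_v6] inVB[OF m_u] inVB[OF m_v8] f6 r2 f124 Esym[OF f138] anti_4_1[OF m_v6 m_v8] h141]])
            qed
            have f142: "\<not> E z v8"
            proof
              assume h143: "E z v8"
              show False by (rule nice_4[OF m_b m_u m_z m_v8 n2 Esym[OF f120] h143 nEsym[OF r7] f140])
            qed
            have f144: "\<not> E y v7"
            proof
              assume h145: "E y v7"
              show False by (rule notE[OF nC4 C4I[OF Esym Eirr neqAB[OF m_y m_v6] neqAB[OF m_y m_u] neqAB[OF m_y m_v7] neq_4_0[OF m_v6 m_u] neq_4_1[OF m_v6 m_v7] neq_0_1[OF m_u m_v7] inVA[OF m_y] inVB[OF m_v6] inVB[OF m_u] inVB[OF m_v7] f6 r2 h145 Esym[OF f138] anti_4_1[OF m_v6 m_v7] f122]])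
            qed
            have f146: "E z v6"
            proof (rule ccontr)
              assume h147: "\<not> E z v6"
              show False by (rule notE[OF nC6 C6I[OF Esym Eirr neqAB[OF m_y m_v6] neqAB[OF m_y m_q] neqAB[OF m_y m_z] neqAB[OF m_y m_v7] neqAB[OF m_y m_v8] n47 neq_4_0[OF m_v6 m_z] neq_4_1[OF m_v6 m_v7] neq_4_1[OF m_v6 m_v8] neq_4_0[OF m_q m_z] neq_4_1[OF m_q m_v7] neq_4_1[OF m_q m_v8] neq_0_1[OF m_z m_v7] neq_0_1[OF m_z m_v8] not_sym[OF n136] inVA[OF m_y] inVB[OF m_v6] inVB[OF m_q] inVB[OF m_z] inVB[OF m_v7] inVB[OF m_v8] f6 f118 f4 f144 f124 clq[OF m_v6 m_q n47] nEsym[OF h147] anti_4_1[OF m_v6 m_v7] anti_4_1[OF m_v6 m_v8] Esym[OF r4] anti_4_1[OF m_q m_v7] anti_4_1[OF m_q m_v8] f116 f142 clq[OF m_v7 m_v8 not_sym[OF n136]]]])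
            qed
            have f148: "\<not> E x v7"
            proof
              assume h149: "E x v7"
              show False by (rule notE[OF nC4 C4I[OF Esym Eirr neqAB[OF m_x m_v6] neqAB[OF m_x m_z] neqAB[OF m_x m_v7] neq_4_0[OF m_v6 m_z] neq_4_1[OF m_v6 m_v7] neq_0_1[OF m_z m_v7] inVA[OF m_x] inVB[OF m_v6] inVB[OF m_z] inVB[OF m_v7] h137 r3 h149 Esym[OF f146] anti_4_1[OF m_v6 m_v7] f116]])
            qed
            have f150: "\<not> E x v8"
            proof
              assume h151: "E x v8"
              show False by (rule notE[OF nC4 C4I[OF Esym Eirr neqAB[OF m_x m_u] neqAB[OF m_x m_v7] neqAB[OF m_x m_v8] neq_0_1[OF m_u m_v7] neq_0_1[OF m_u m_v8] not_sym[OF n136] inVA[OF m_x] inVB[OF m_u] inVB[OF m_v7] inVB[OF m_v8] r1 f148 h151 f122 f140 clq[OF m_v7 m_v8 not_sym[OF n136]]]])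
            qed
            show False
            proof (cases "E y b")
              case True note h152 = True
              show False by (rule notE[OF nC6 C6I[OF Esym Eirr neqAB[OF m_y m_b] neqAB[OF m_y m_q] neqAB[OF m_y m_z] neqAB[OF m_y m_v7] neqAB[OF m_y m_v8] not_sym[OF n3] neq_4_0[OF m_b m_z] neq_4_1[OF m_b m_v7] neq_4_1[OF m_b m_v8] neq_4_0[OF m_q m_z] neq_4_1[OF m_q m_v7] neq_4_1[OF m_q m_v8] neq_0_1[OF m_z m_v7] neq_0_1[OF m_z m_v8] not_sym[OF n136] inVA[OF m_y] inVB[OF m_b] inVB[OF m_q] inVB[OF m_z] inVB[OF m_v7] inVB[OF m_v8] h152 f118 f4 f144 f124 clq[OF m_b m_q not_sym[OF n3]] nEsym[OF r7] anti_4_1[OF m_b m_v7] anti_4_1[OF m_b m_v8] Esym[OF r4] anti_4_1[OF m_q m_v7] anti_4_1[OF m_q m_v8] f116 f142 clq[OF m_v7 m_v8 not_sym[OF n136]]]])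
            next
              case False note h153 = False
              show False by (rule notE[OF nC7 C7I[OF Esym Eirr n1 neqAB[OF m_x m_v8] neqAB[OF m_x m_v7] neqAB[OF m_x m_z] neqAB[OF m_x m_q] neqAB[OF m_x m_b] neqAB[OF m_y m_v8] neqAB[OF m_y m_v7] neqAB[OF m_y m_z] neqAB[OF m_y m_q] neqAB[OF m_y m_b] n136 neq_1_0[OF m_v8 m_z] neq_1_4[OF m_v8 m_q] neq_1_4[OF m_v8 m_b] neq_1_0[OF m_v7 m_z] neq_1_4[OF m_v7 m_q] neq_1_4[OF m_v7 m_b] neq_0_4[OF m_z m_q] neq_0_4[OF m_z m_b] n3 inVA[OF m_x] inVA[OF m_y] inVB[OF m_v8] inVB[OF m_v7] inVB[OF m_z] inVB[OF m_q] inVB[OF m_b] r0 f150 f148 r3 r5 r6 f124 f144 f4 f118 h153 clq[OF m_v8 m_v7 n136] nEsym[OF f142] anti_1_4[OF m_v8 m_q] anti_1_4[OF m_v8 m_b] Esym[OF f116] anti_1_4[OF m_v7 m_q] anti_1_4[OF m_v7 m_b] r4 r7 clq[OF m_q m_b n3]]])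
            qed
          next
            case False note h154 = False
            have f155: "E y b"
            proof (rule ccontr)
              assume h156: "\<not> E y b"
              show False by (rule notE[OF nC4 C4I[OF Esym Eirr n1 neqAB[OF m_x m_v6] neqAB[OF m_x m_b] neqAB[OF m_y m_v6] neqAB[OF m_y m_b] n115 inVA[OF m_x] inVA[OF m_y] inVB[OF m_v6] inVB[OF m_b] r0 h154 r6 f6 h156 clq[OF m_v6 m_b n115]]])
            qed
            have f157: "\<not> E y v7"
            proof
              assume h158: "E y v7"
              show False by (rule notE[OF nC4 C4I[OF Esym Eirr neqAB[OF m_y m_b] neqAB[OF m_y m_u] neqAB[OF m_y m_v7] neq_4_0[OF m_b m_u] neq_4_1[OF m_b m_v7] neq_0_1[OF m_u m_v7] inVA[OF m_y] inVB[OF m_b] inVB[OF m_u] inVB[OF m_v7] f155 r2 h158 Esym[OF f120] anti_4_1[OF m_b m_v7] f122]])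
            qed
            have f159: "\<not> E u v6"
            proof
              assume h160: "E u v6"
              show False by (rule notE[OF nC4 C4I[OF Esym Eirr n1 neqAB[OF m_x m_v6] neqAB[OF m_x m_u] neqAB[OF m_y m_v6] neqAB[OF m_y m_u] neq_4_0[OF m_v6 m_u] inVA[OF m_x] inVA[OF m_y] inVB[OF m_v6] inVB[OF m_u] r0 h154 r1 f6 r2 Esym[OF h160]]])
            qed
            show False
            proof (cases "E u v8")
              case True note h161 = True
              show False by (rule notE[OF nC4 C4I[OF Esym Eirr neqAB[OF m_y m_b] neqAB[OF m_y m_u] neqAB[OF m_y m_v8] neq_4_0[OF m_b m_u] neq_4_1[OF m_b m_v8] neq_0_1[OF m_u m_v8] inVA[OF m_y] inVB[OF m_b] inVB[OF m_u] inVB[OF m_v8] f155 r2 f124 Esym[OF f120] anti_4_1[OF m_b m_v8] h161]])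
            next
              case False note h162 = False
              show False by (rule notE[OF nC6 C6I[OF Esym Eirr neqAB[OF m_y m_v6] neqAB[OF m_y m_q] neqAB[OF m_y m_u] neqAB[OF m_y m_v7] neqAB[OF m_y m_v8] n47 neq_4_0[OF m_v6 m_u] neq_4_1[OF m_v6 m_v7] neq_4_1[OF m_v6 m_v8] neq_4_0[OF m_q m_u] neq_4_1[OF m_q m_v7] neq_4_1[OF m_q m_v8] neq_0_1[OF m_u m_v7] neq_0_1[OF m_u m_v8] not_sym[OF n136] inVA[OF m_y] inVB[OF m_v6] inVB[OF m_q] inVB[OF m_u] inVB[OF m_v7] inVB[OF m_v8] f6 f118 r2 f157 f124 clq[OF m_v6 m_q n47] nEsym[OF f159] anti_4_1[OF m_v6 m_v7] anti_4_1[OF m_v6 m_v8] Esym[OF h117] anti_4_1[OF m_q m_v7] anti_4_1[OF m_q m_v8] f122 h162 clq[OF m_v7 m_v8 not_sym[OF n136]]]])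
            qed
          qed
        qed
      next
        case False note h163 = False
        have f164: "\<not> E u b"
        proof
          assume h165: "E u b"
          show False by (rule notE[OF nC4 C4I[OF Esym Eirr n2 neq_0_4[OF m_u m_q] neq_0_4[OF m_u m_b] neq_0_4[OF m_z m_q] neq_0_4[OF m_z m_b] n3 inVB[OF m_u] inVB[OF m_z] inVB[OF m_q] inVB[OF m_b] clq[OF m_u m_z n2] h163 h165 r4 r7 clq[OF m_q m_b n3]]])
        qed
        obtain v8 where m_v8: "v8 \<in> B (cl 1)" and f166: "E x v8" using witA_1[OF m_x] by auto
        show False
        proof (cases "v8 = v7")
          case True
          have f167: "E x v7" using f166 True by simp
          have f168: "E u v7"
          proof (rule ccontr)
            assume h169: "\<not> E u v7"
            show False by (rule notE[OF nC4 C4I[OF Esym Eirr neqAB[OF m_x m_u] neqAB[OF m_x m_z] neqAB[OF m_x m_v7] n2 neq_0_1[OF m_u m_v7] neq_0_1[OF m_z m_v7] inVA[OF m_x] inVB[OF m_u] inVB[OF m_z] inVB[OF m_v7] r1 r3 f167 clq[OF m_u m_z n2] h169 f116]])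
          qed
          obtain v8 where m_v8: "v8 \<in> B (cl 4)" and f170: "E u v8" using wit_0_4[OF m_u] by auto
          show False
          proof (cases "v8 = v6")
            case True
            have f171: "E u v6" using f170 True by simp
            have f172: "E x v6"
            proof (rule ccontr)
              assume h173: "\<not> E x v6"
              show False by (rule notE[OF nC4 C4I[OF Esym Eirr n1 neqAB[OF m_x m_v6] neqAB[OF m_x m_u] neqAB[OF m_y m_v6] neqAB[OF m_y m_u] neq_4_0[OF m_v6 m_u] inVA[OF m_x] inVA[OF m_y] inVB[OF m_v6] inVB[OF m_u] r0 h173 r1 f6 r2 Esym[OF f171]]])
            qed
            have f174: "\<not> E y v7"
            proof
              assume h175: "E y v7"
              show False by (rule notE[OF nC4 C4I[OF Esym Eirr neqAB[OF m_y m_v6] neqAB[OF m_y m_u] neqAB[OF m_y m_v7] neq_4_0[OF m_v6 m_u] neq_4_1[OF m_v6 m_v7] neq_0_1[OF m_u m_v7] inVA[OF m_y] inVB[OF m_v6] inVB[OF m_u] inVB[OF m_v7] f6 r2 h175 Esym[OF f171] anti_4_1[OF m_v6 m_v7] f168]])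
            qed
            show False
            proof (cases "E z v6")
              case True note h176 = True
              show False by (rule notE[OF nC4 C4I[OF Esym Eirr neqAB[OF m_x m_v6] neqAB[OF m_x m_z] neqAB[OF m_x m_v7] neq_4_0[OF m_v6 m_z] neq_4_1[OF m_v6 m_v7] neq_0_1[OF m_z m_v7] inVA[OF m_x] inVB[OF m_v6] inVB[OF m_z] inVB[OF m_v7] f172 r3 f167 Esym[OF h176] anti_4_1[OF m_v6 m_v7] f116]])
            next
              case False note h177 = False
              show False by (rule notE[OF nC4 C4I[OF Esym Eirr n2 neq_0_4[OF m_u m_q] neq_0_4[OF m_u m_v6] neq_0_4[OF m_z m_q] neq_0_4[OF m_z m_v6] not_sym[OF n47] inVB[OF m_u] inVB[OF m_z] inVB[OF m_q] inVB[OF m_v6] clq[OF m_u m_z n2] h163 f171 r4 h177 clq[OF m_q m_v6 not_sym[OF n47]]]])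
            qed
          next
            case False note n178 = False
            have n179: "v8 \<noteq> q" using f170 h163 by auto
            have n180: "v8 \<noteq> b" using f170 f164 by auto
            have f181: "E x v8"
            proof (rule ccontr)
              assume h182: "\<not> E x v8"
              show False by (rule notE[OF nC4 C4I[OF Esym Eirr neqAB[OF m_x m_u] neqAB[OF m_x m_v8] neqAB[OF m_x m_b] neq_0_4[OF m_u m_v8] neq_0_4[OF m_u m_b] n180 inVA[OF m_x] inVB[OF m_u] inVB[OF m_v8] inVB[OF m_b] r1 h182 r6 f170 f164 clq[OF m_v8 m_b n180]]])
            qed
            show False
            proof (cases "E z v8")
              case True note h183 = True
              show False by (rule notE[OF nC4 C4I[OF Esym Eirr neqAB[OF m_x m_v7] neqAB[OF m_x m_z] neqAB[OF m_x m_v8] neq_1_0[OF m_v7 m_z] neq_1_4[OF m_v7 m_v8] neq_0_4[OF m_z m_v8] inVA[OF m_x] inVB[OF m_v7] inVB[OF m_z] inVB[OF m_v8] f167 r3 f181 Esym[OF f116] anti_1_4[OF m_v7 m_v8] h183]])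
            next
              case False note h184 = False
              show False by (rule notE[OF nC4 C4I[OF Esym Eirr n2 neq_0_4[OF m_u m_q] neq_0_4[OF m_u m_v8] neq_0_4[OF m_z m_q] neq_0_4[OF m_z m_v8] not_sym[OF n179] inVB[OF m_u] inVB[OF m_z] inVB[OF m_q] inVB[OF m_v8] clq[OF m_u m_z n2] h163 f170 r4 h184 clq[OF m_q m_v8 not_sym[OF n179]]]])
            qed
          qed
        next
          case False note n185 = False
          obtain v9 where m_v9: "v9 \<in> B (cl 4)" and f186: "E u v9" using wit_0_4[OF m_u] by auto
          show False
          proof (cases "v9 = v6")
            case True
            have f187: "E u v6" using f186 True by simp
            have f188: "E x v6"
            proof (rule ccontr)
              assume h189: "\<not> E x v6"
              show False by (rule notE[OF nC4 C4I[OF Esym Eirr n1 neqAB[OF m_x m_v6] neqAB[OF m_x m_u] neqAB[OF m_y m_v6] neqAB[OF m_y m_u] neq_4_0[OF m_v6 m_u] inVA[OF m_x] inVA[OF m_y] inVB[OF m_v6] inVB[OF m_u] r0 h189 r1 f6 r2 Esym[OF f187]]])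
            qed
            have f190: "E z v6"
            proof (rule ccontr)
              assume h191: "\<not> E z v6"
              show False by (rule notE[OF nC4 C4I[OF Esym Eirr n2 neq_0_4[OF m_u m_q] neq_0_4[OF m_u m_v6] neq_0_4[OF m_z m_q] neq_0_4[OF m_z m_v6] not_sym[OF n47] inVB[OF m_u] inVB[OF m_z] inVB[OF m_q] inVB[OF m_v6] clq[OF m_u m_z n2] h163 f187 r4 h191 clq[OF m_q m_v6 not_sym[OF n47]]]])
            qed
            have f192: "\<not> E z v8"
            proof
              assume h193: "E z v8"
              show False by (rule notE[OF nC4 C4I[OF Esym Eirr neqAB[OF m_x m_v6] neqAB[OF m_x m_z] neqAB[OF m_x m_v8] neq_4_0[OF m_v6 m_z] neq_4_1[OF m_v6 m_v8] neq_0_1[OF m_z m_v8] inVA[OF m_x] inVB[OF m_v6] inVB[OF m_z] inVB[OF m_v8] f188 r3 f166 Esym[OF f190] anti_4_1[OF m_v6 m_v8] h193]])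
            qed
            show False
            proof (cases "E x v7")
              case True note h194 = True
              show False by (rule notE[OF nC4 C4I[OF Esym Eirr neqAB[OF m_x m_v6] neqAB[OF m_x m_z] neqAB[OF m_x m_v7] neq_4_0[OF m_v6 m_z] neq_4_1[OF m_v6 m_v7] neq_0_1[OF m_z m_v7] inVA[OF m_x] inVB[OF m_v6] inVB[OF m_z] inVB[OF m_v7] f188 r3 h194 Esym[OF f190] anti_4_1[OF m_v6 m_v7] f116]])
            next
              case False note h195 = False
              show False by (rule notE[OF nC6 C6I[OF Esym Eirr neqAB[OF m_x m_b] neqAB[OF m_x m_q] neqAB[OF m_x m_z] neqAB[OF m_x m_v7] neqAB[OF m_x m_v8] not_sym[OF n3] neq_4_0[OF m_b m_z] neq_4_1[OF m_b m_v7] neq_4_1[OF m_b m_v8] neq_4_0[OF m_q m_z] neq_4_1[OF m_q m_v7] neq_4_1[OF m_q m_v8] neq_0_1[OF m_z m_v7] neq_0_1[OF m_z m_v8] not_sym[OF n185] inVA[OF m_x] inVB[OF m_b] inVB[OF m_q] inVB[OF m_z] inVB[OF m_v7] inVB[OF m_v8] r6 r5 r3 h195 f166 clq[OF m_b m_q not_sym[OF n3]] nEsym[OF r7] anti_4_1[OF m_b m_v7] anti_4_1[OF m_b m_v8] Esym[OF r4] anti_4_1[OF m_q m_v7] anti_4_1[OF m_q m_v8] f116 f192 clq[OF m_v7 m_v8 not_sym[OF n185]]]])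
            qed
          next
            case False note n196 = False
            have n197: "v9 \<noteq> q" using f186 h163 by auto
            have n198: "v9 \<noteq> b" using f186 f164 by auto
            have f199: "E x v9"
            proof (rule ccontr)
              assume h200: "\<not> E x v9"
              show False by (rule notE[OF nC4 C4I[OF Esym Eirr neqAB[OF m_x m_u] neqAB[OF m_x m_v9] neqAB[OF m_x m_b] neq_0_4[OF m_u m_v9] neq_0_4[OF m_u m_b] n198 inVA[OF m_x] inVB[OF m_u] inVB[OF m_v9] inVB[OF m_b] r1 h200 r6 f186 f164 clq[OF m_v9 m_b n198]]])
            qed
            have f201: "E z v9"
            proof (rule ccontr)
              assume h202: "\<not> E z v9"
              show False by (rule notE[OF nC4 C4I[OF Esym Eirr n2 neq_0_4[OF m_u m_q] neq_0_4[OF m_u m_v9] neq_0_4[OF m_z m_q] neq_0_4[OF m_z m_v9] not_sym[OF n197] inVB[OF m_u] inVB[OF m_z] inVB[OF m_q] inVB[OF m_v9] clq[OF m_u m_z n2] h163 f186 r4 h202 clq[OF m_q m_v9 not_sym[OF n197]]]])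
            qed
            have f203: "\<not> E x v7"
            proof
              assume h204: "E x v7"
              show False by (rule notE[OF nC4 C4I[OF Esym Eirr neqAB[OF m_x m_v7] neqAB[OF m_x m_z] neqAB[OF m_x m_v9] neq_1_0[OF m_v7 m_z] neq_1_4[OF m_v7 m_v9] neq_0_4[OF m_z m_v9] inVA[OF m_x] inVB[OF m_v7] inVB[OF m_z] inVB[OF m_v9] h204 r3 f199 Esym[OF f116] anti_1_4[OF m_v7 m_v9] f201]])
            qed
            show False
            proof (cases "E z v8")
              case True note h205 = True
              show False by (rule notE[OF nC4 C4I[OF Esym Eirr neqAB[OF m_x m_v8] neqAB[OF m_x m_z] neqAB[OF m_x m_v9] neq_1_0[OF m_v8 m_z] neq_1_4[OF m_v8 m_v9] neq_0_4[OF m_z m_v9] inVA[OF m_x] inVB[OF m_v8] inVB[OF m_z] inVB[OF m_v9] f166 r3 f199 Esym[OF h205] anti_1_4[OF m_v8 m_v9] f201]])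
            next
              case False note h206 = False
              show False by (rule notE[OF nC6 C6I[OF Esym Eirr neqAB[OF m_x m_b] neqAB[OF m_x m_q] neqAB[OF m_x m_z] neqAB[OF m_x m_v7] neqAB[OF m_x m_v8] not_sym[OF n3] neq_4_0[OF m_b m_z] neq_4_1[OF m_b m_v7] neq_4_1[OF m_b m_v8] neq_4_0[OF m_q m_z] neq_4_1[OF m_q m_v7] neq_4_1[OF m_q m_v8] neq_0_1[OF m_z m_v7] neq_0_1[OF m_z m_v8] not_sym[OF n185] inVA[OF m_x] inVB[OF m_b] inVB[OF m_q] inVB[OF m_z] inVB[OF m_v7] inVB[OF m_v8] r6 r5 r3 f203 f166 clq[OF m_b m_q not_sym[OF n3]] nEsym[OF r7] anti_4_1[OF m_b m_v7] anti_4_1[OF m_b m_v8] Esym[OF r4] anti_4_1[OF m_q m_v7] anti_4_1[OF m_q m_v8] f116 h206 clq[OF m_v7 m_v8 not_sym[OF n185]]]])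
            qed
          qed
        qed
      qed
    qed
  qed
qed

lemma xcomplete:
  assumes m_x: "x \<in> A3 V E B i" and m_y: "y \<in> A3 V E B i" and r0: "E x y"
    and m_u: "u \<in> B (cl 0)" and r1: "E x u" and r2: "\<not> E y u" and m_z: "z \<in> B (cl 0)"
  shows "E x z"
proof (rule ccontr)
  assume r3: "\<not> E x z"
  have "(\<forall>b\<in>B (cl 1). E x b \<longrightarrow> \<not> E z b) \<or> (\<forall>a\<in>B (cl 4). E x a \<longrightarrow> \<not> E z a)"
  proof (rule ccontr)
    assume "\<not> ?thesis"
    then obtain a b where m_a: "a \<in> B (cl 4)" and xa: "E x a" and za: "E z a"
      and m_b: "b \<in> B (cl 1)" and xb: "E x b" and zb: "E z b" by blast
    show False
      by (rule notE[OF nC4 C4I[OF Esym Eirr neqAB[OF m_x m_a] neqAB[OF m_x m_z] neqAB[OF m_x m_b]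
        neq_4_0[OF m_a m_z] neq_4_1[OF m_a m_b] neq_0_1[OF m_z m_b]
        inVA[OF m_x] inVB[OF m_a] inVB[OF m_z] inVB[OF m_b]
        xa r3 xb Esym[OF za] anti_4_1[OF m_a m_b] zb]])
  qed
  then show False
  proof
    assume H: "\<forall>b\<in>B (cl 1). E x b \<longrightarrow> \<not> E z b"
    obtain q where m_q: "q \<in> B (cl 1)" and zq: "E z q" using wit_0_1[OF m_z] by auto
    have xq: "\<not> E x q" using H m_q zq by blast
    obtain b where m_b: "b \<in> B (cl 1)" and xb: "E x b" using witA_1[OF m_x] by auto
    have zb: "\<not> E z b" using H m_b xb by blast
    show False by (rule K1[OF m_x m_y m_u m_z m_q m_b r0 r1 r2 r3 zq xq xb zb])
  next
    assume H: "\<forall>b\<in>B (cl 4). E x b \<longrightarrow> \<not> E z b"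
    obtain q where m_q: "q \<in> B (cl 4)" and zq: "E z q" using wit_0_4[OF m_z] by auto
    have xq: "\<not> E x q" using H m_q zq by blast
    obtain b where m_b: "b \<in> B (cl 4)" and xb: "E x b" using witA_4[OF m_x] by auto
    have zb: "\<not> E z b" using H m_b xb by blast
    show False by (rule K4[OF m_x m_y m_u m_z m_q m_b r0 r1 r2 r3 zq xq xb zb])
  qed
qed

lemma cl_surj: "j < 5 \<Longrightarrow> j = cl ((j + 5 - i) mod 5)"
  using lt5[OF i5] by (auto dest!: lt5 simp: cl_def)

lemma notinB: "x \<in> A3 V E B i \<Longrightarrow> j < 5 \<Longrightarrow> x \<notin> B j"
  unfolding A3_def blowup_verts_def by blast

lemma nxtE0: "nxt (cl 0) = cl 1" unfolding nxt_def cl_def using lt5[OF i5] by (elim disjE; simp)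
lemma nxtE1: "nxt (cl 1) = cl 2" unfolding nxt_def cl_def using lt5[OF i5] by (elim disjE; simp)
lemma nxtE2: "nxt (cl 2) = cl 3" unfolding nxt_def cl_def using lt5[OF i5] by (elim disjE; simp)
lemma nxtE3: "nxt (cl 3) = cl 4" unfolding nxt_def cl_def using lt5[OF i5] by (elim disjE; simp)
lemma nxtE4: "nxt (cl 4) = cl 0" unfolding nxt_def cl_def using lt5[OF i5] by (elim disjE; simp)

lemma ext_nice:
  assumes m_x: "x \<in> A3 V E B i" and comp: "\<forall>z\<in>B (cl 0). E x z"
  shows "nice_blowup V E (B(cl 0 := insert x (B (cl 0))))"
proof -
  define B' where "B' = B(cl 0 := insert x (B (cl 0)))"
  have Bk: "B' (cl k) = B (cl k)" if "k \<noteq> 0" "k < 5" for k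
  proof -
    have "cl k \<noteq> cl 0" using cl_inj[of k 0] that by auto
    then show ?thesis unfolding B'_def by simp
  qed
  have B0: "B' (cl 0) = insert x (B (cl 0))" unfolding B'_def by simp
  have sub: "\<And>j. B j \<subseteq> B' j" unfolding B'_def by auto
  have Bj: "\<And>j. j \<noteq> cl 0 \<Longrightarrow> B' j = B j" unfolding B'_def by simp
  have xV: "x \<in> V" by (rule inVA[OF m_x])
  have xn: "\<And>j. j < 5 \<Longrightarrow> x \<notin> B j" using notinB[OF m_x] .
  have c1: "\<forall>j<5. B' j \<subseteq> V"
    using NB1 xV unfolding B'_def by auto
  have c2: "\<forall>j<5. \<forall>a\<in>B' j. \<forall>b\<in>B' j. a \<noteq> b \<longrightarrow> E a b"
  proof (intro allI impI ballI)
    fix j a b assume j: "j < 5" and a: "a \<in> B' j" and b: "b \<in> B' j" and ab: "a \<noteq> b"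
    show "E a b"
    proof (cases "j = cl 0")
      case True
      then have a': "a = x \<or> a \<in> B (cl 0)" and b': "b = x \<or> b \<in> B (cl 0)" using a b B0 by auto
      then show ?thesis using ab comp Esym NB2 cl5[of 0] by metis
    next
      case False
      then show ?thesis using a b ab NB2 j Bj by auto
    qed
  qed
  have c3: "\<forall>j<5. \<forall>k<5. j \<noteq> k \<longrightarrow> B' j \<inter> B' k = {}"
    using NB3 xn unfolding B'_def by auto
  have c4: "\<forall>j<5. \<forall>v\<in>B' j. (\<exists>u\<in>B' (prv j). E v u) \<and> (\<exists>u\<in>B' (nxt j). E v u)"
  proof (intro allI impI ballI)
    fix j v assume j: "j < 5" and v: "v \<in> B' j"
    show "(\<exists>u\<in>B' (prv j). E v u) \<and> (\<exists>u\<in>B' (nxt j). E v u)"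
    proof (cases "v \<in> B j")
      case True
      then show ?thesis using NB4 j sub by blast
    next
      case False
      then have vx: "v = x" and j0: "j = cl 0" using v unfolding B'_def by (auto split: if_splits)
      have p: "prv j = cl 4" "nxt j = cl 1" using j0 cl0 cl1 cl4 by auto
      have w4: "\<exists>u\<in>B' (cl 4). E x u" using witA_4[OF m_x] sub[of "cl 4"] by blast
      have w1: "\<exists>u\<in>B' (cl 1). E x u" using witA_1[OF m_x] sub[of "cl 1"] by blast
      show ?thesis unfolding p vx using w4 w1 by blast
    qed
  qed
  have c5: "\<forall>j<5. \<forall>a\<in>B' j. \<forall>b\<in>B' ((j + 2) mod 5). \<not> E a b"
  proof (intro allI impI ballI)
    fix j a b assume j: "j < 5" and a: "a \<in> B' j" and b: "b \<in> B' ((j + 2) mod 5)"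
    show "\<not> E a b"
    proof (cases "a = x")
      case True
      then have j0: "j = i" using a xn j unfolding B'_def cl0 by (auto split: if_splits)
      have "(j + 2) mod 5 = cl 2" unfolding cl_def using j0 by simp
      then have "b \<in> B (cl 2)" using b Bk[of 2] by simp
      then show ?thesis using True antiA_2[OF m_x] by blast
    next
      case F1: False
      then have a': "a \<in> B j" using a unfolding B'_def by (auto split: if_splits)
      show ?thesis
      proof (cases "b = x")
        case True
        then have h: "(j + 2) mod 5 = i" using b xn unfolding B'_def cl0 by (auto split: if_splits)
        have "j = cl 3" unfolding cl_def using lt5[OF j] lt5[OF i5] h by (elim disjE; simp)
        then show ?thesis using True a' antiB_3[OF _ m_x] by blast
      next
        case False
        then have "b \<in> B ((j + 2) mod 5)" using b unfolding B'_def by (auto split: if_splits)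
        then show ?thesis using a' NB5 j by blast
      qed
    qed
  qed
  have c6: "\<forall>j<5. \<not> (\<exists>a\<in>B' j. \<exists>b\<in>B' (nxt j). \<exists>c\<in>B' (nxt j). \<exists>d\<in>B' (nxt (nxt j)).
         b \<noteq> c \<and> induces_P4 E {a, b, c, d})"
  proof (intro allI impI notI)
    fix j :: nat assume j: "j < 5"
    assume "\<exists>a\<in>B' j. \<exists>b\<in>B' (nxt j). \<exists>c\<in>B' (nxt j). \<exists>d\<in>B' (nxt (nxt j)). b \<noteq> c \<and> induces_P4 E {a, b, c, d}"
    then obtain a b c d where a: "a \<in> B' j" and b: "b \<in> B' (nxt j)" and c: "c \<in> B' (nxt j)"
      and d: "d \<in> B' (nxt (nxt j))" and bc: "b \<noteq> c" and P: "induces_P4 E {a, b, c, d}" by blast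
    define k where "k = (j + 5 - i) mod 5"
    have k5: "k < 5" unfolding k_def by simp
    have jk: "j = cl k" using cl_surj[OF j] k_def by simp
    show False
    proof (cases "a \<in> B j \<and> b \<in> B (nxt j) \<and> c \<in> B (nxt j) \<and> d \<in> B (nxt (nxt j))")
      case True
      then show False using NB6 j bc P by blast
    next
      case False
      have "k = 0 \<or> k = 1 \<or> k = 2 \<or> k = 3 \<or> k = 4" using lt5[OF k5] .
      then show False
      proof (elim disjE)
        assume k0: "k = 0"
        have nj: "nxt j = cl 1" "nxt (nxt j) = cl 2" using jk k0 nxtE0 nxtE1 nxtE2 nxtE3 nxtE4 by simp_all
        have b1: "b \<in> B (cl 1)" and c1: "c \<in> B (cl 1)" and d1: "d \<in> B (cl 2)" using b c d nj Bk by auto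
        have ax: "a = x" using False a b1 c1 d1 nj jk k0 unfolding B'_def by (auto split: if_splits)
        have dist: "distinct [a,b,c,d]" using ax bc neqAB[OF m_x b1] neqAB[OF m_x c1] neqAB[OF m_x d1]
          neq_1_2[OF b1 d1] neq_1_2[OF c1 d1] by auto
        have pat: "(E a b \<and> E c d \<and> \<not> E a c \<and> \<not> E b d) \<or> (E a c \<and> E b d \<and> \<not> E a b \<and> \<not> E c d)"
          by (rule P4D[OF Esym dist P clq[OF b1 c1 bc]]) (simp_all add: ax antiA_2[OF m_x d1])
        then show False
        proof
          assume h: "E a b \<and> E c d \<and> \<not> E a c \<and> \<not> E b d"
          then have h': "E x b" "E c d" "\<not> E x c" "\<not> E b d" using ax by simp_all
          show False by (rule G2m[OF m_x d1 c1 b1 Esym[OF h'(2)] nEsym[OF h'(4)] Esym[OF h'(1)] nEsym[OF h'(3)]])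
        next
          assume h: "E a c \<and> E b d \<and> \<not> E a b \<and> \<not> E c d"
          then have h': "E x c" "E b d" "\<not> E x b" "\<not> E c d" using ax by simp_all
          show False by (rule G2m[OF m_x d1 b1 c1 Esym[OF h'(2)] nEsym[OF h'(4)] Esym[OF h'(1)] nEsym[OF h'(3)]])
        qed
      next
        assume k1: "k = 1"
        have nj: "j = cl 1" "nxt j = cl 2" "nxt (nxt j) = cl 3" using jk k1 nxtE0 nxtE1 nxtE2 nxtE3 nxtE4 by simp_all
        show False using False a b c d nj Bk[of 1] Bk[of 2] Bk[of 3] by auto
      next
        assume k2: "k = 2"
        have nj: "j = cl 2" "nxt j = cl 3" "nxt (nxt j) = cl 4" using jk k2 nxtE0 nxtE1 nxtE2 nxtE3 nxtE4 by simp_all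
        show False using False a b c d nj Bk[of 2] Bk[of 3] Bk[of 4] by auto
      next
        assume k3: "k = 3"
        have nj: "j = cl 3" "nxt j = cl 4" "nxt (nxt j) = cl 0" using jk k3 nxtE0 nxtE1 nxtE2 nxtE3 nxtE4 by simp_all
        have a1: "a \<in> B (cl 3)" and b1: "b \<in> B (cl 4)" and c1: "c \<in> B (cl 4)" using a b c nj Bk by auto
        have dx: "d = x" using False d a1 b1 c1 nj unfolding B'_def by (auto split: if_splits)
        have dist: "distinct [a,b,c,d]" using dx bc neqBA[OF a1 m_x] neqBA[OF b1 m_x] neqBA[OF c1 m_x]
          neq_3_4[OF a1 b1] neq_3_4[OF a1 c1] by auto
        have pat: "(E a b \<and> E c d \<and> \<not> E a c \<and> \<not> E b d) \<or> (E a c \<and> E b d \<and> \<not> E a b \<and> \<not> E c d)"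
          by (rule P4D[OF Esym dist P clq[OF b1 c1 bc]]) (simp_all add: dx antiB_3[OF a1 m_x])
        then show False
        proof
          assume h: "E a b \<and> E c d \<and> \<not> E a c \<and> \<not> E b d"
          then have h': "E a b" "E c x" "\<not> E a c" "\<not> E b x" using dx by simp_all
          show False by (rule G2[OF m_x a1 b1 c1 h'(1) h'(3) h'(2) h'(4)])
        next
          assume h: "E a c \<and> E b d \<and> \<not> E a b \<and> \<not> E c d"
          then have h': "E a c" "E b x" "\<not> E a b" "\<not> E c x" using dx by simp_all
          show False by (rule G2[OF m_x a1 c1 b1 h'(1) h'(3) h'(2) h'(4)])
        qed
      next
        assume k4: "k = 4"
        have nj: "j = cl 4" "nxt j = cl 0" "nxt (nxt j) = cl 1" using jk k4 nxtE0 nxtE1 nxtE2 nxtE3 nxtE4 by simp_all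
        have a1: "a \<in> B (cl 4)" and d1: "d \<in> B (cl 1)" using a d nj Bk by auto
        have bx: "(b = x \<and> c \<in> B (cl 0)) \<or> (c = x \<and> b \<in> B (cl 0))"
          using False a1 d1 b c bc nj B0 by auto
        have ad: "\<not> E a d" by (rule anti_4_1[OF a1 d1])
        then show False
        proof (cases "b = x \<and> c \<in> B (cl 0)")
          case True
          then have bx: "b = x" and m1: "c \<in> B (cl 0)" by auto
          have xm: "E x c" using comp m1 by blast
          have dist: "distinct [a,b,c,d]" using bx bc neqBA[OF a1 m_x] neqAB[OF m_x m1] neqAB[OF m_x d1]
            neq_4_0[OF a1 m1] neq_4_1[OF a1 d1] neq_0_1[OF m1 d1] by auto
          have pat: "(E a b \<and> E c d \<and> \<not> E a c \<and> \<not> E b d) \<or> (E a c \<and> E b d \<and> \<not> E a b \<and> \<not> E c d)"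
            by (rule P4D[OF Esym dist P]) (simp_all add: xm bx ad)
          then show False
          proof
            assume h: "E a b \<and> E c d \<and> \<not> E a c \<and> \<not> E b d"
            then have h': "E a x" "E c d" "\<not> E a c" "\<not> E x d" using bx by simp_all
            show False by (rule G1[OF m_x a1 m1 d1 Esym[OF h'(1)] xm h'(4) h'(3) h'(2)])
          next
            assume h: "E a c \<and> E b d \<and> \<not> E a b \<and> \<not> E c d"
            then have h': "E a c" "E x d" "\<not> E a x" "\<not> E c d" using bx by simp_all
            show False by (rule G1m[OF m_x d1 m1 a1 h'(2) xm nEsym[OF h'(3)] nEsym[OF h'(4)] Esym[OF h'(1)]])
          qed
        next
          case False
          then have cx: "c = x" and m1: "b \<in> B (cl 0)" using bx by auto
          have xm: "E x b" using comp m1 by blast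
          have dist: "distinct [a,b,c,d]" using cx bc neqBA[OF a1 m_x] neqAB[OF m_x m1] neqAB[OF m_x d1]
            neq_4_0[OF a1 m1] neq_4_1[OF a1 d1] neq_0_1[OF m1 d1] by auto
          have pat: "(E a b \<and> E c d \<and> \<not> E a c \<and> \<not> E b d) \<or> (E a c \<and> E b d \<and> \<not> E a b \<and> \<not> E c d)"
            by (rule P4D[OF Esym dist P]) (simp_all add: Esym[OF xm] cx ad)
          then show False
          proof
            assume h: "E a b \<and> E c d \<and> \<not> E a c \<and> \<not> E b d"
            then have h': "E a b" "E x d" "\<not> E a x" "\<not> E b d" using cx by simp_all
            show False by (rule G1m[OF m_x d1 m1 a1 h'(2) xm nEsym[OF h'(3)] nEsym[OF h'(4)] Esym[OF h'(1)]])
          next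
            assume h: "E a c \<and> E b d \<and> \<not> E a b \<and> \<not> E c d"
            then have h': "E a x" "E b d" "\<not> E a b" "\<not> E x d" using cx by simp_all
            show False by (rule G1[OF m_x a1 m1 d1 Esym[OF h'(1)] xm h'(4) h'(3) h'(2)])
          qed
        qed
      qed
    qed
  qed
  show ?thesis unfolding nice_blowup_def B'_def[symmetric] using c1 c2 c3 c4 c5 c6 by blast
qed

lemma step:
  assumes max: "\<not> (\<exists>B'. nice_blowup V E B' \<and> blowup_verts B \<subset> blowup_verts B')"
    and m_x: "x \<in> A3 V E B i" and m_y: "y \<in> A3 V E B i" and r0: "E x y"
    and m_u: "u \<in> B i" and r1: "E x u" and r2: "\<not> E y u"
  shows False
proof -
  have m_u': "u \<in> B (cl 0)" using m_u cl0 by simp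
  have comp: "\<forall>z\<in>B (cl 0). E x z" using xcomplete[OF m_x m_y r0 m_u' r1 r2] by blast
  have N: "nice_blowup V E (B(cl 0 := insert x (B (cl 0))))" by (rule ext_nice[OF m_x comp])
  have "blowup_verts B \<subseteq> blowup_verts (B(cl 0 := insert x (B (cl 0))))"
    unfolding blowup_verts_def by auto
  moreover have "x \<in> blowup_verts (B(cl 0 := insert x (B (cl 0))))"
    unfolding blowup_verts_def using cl5[of 0] by auto
  moreover have "x \<notin> blowup_verts B" using m_x unfolding A3_def by blast
  ultimately have "blowup_verts B \<subset> blowup_verts (B(cl 0 := insert x (B (cl 0))))" by blast
  then show False using max N by blast
qed

end

theorem lemma8p3:
  fixes V :: "'a set" and E :: "'a \<Rightarrow> 'a \<Rightarrow> bool" and B :: "nat \<Rightarrow> 'a set"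
  assumes "graph V E"
    and "\<not> has_induced V E 7 path_adj"
    and "\<not> has_induced V E 4 (cycle_adj 4)"
    and "\<not> has_induced V E 6 (cycle_adj 6)"
    and "\<not> has_induced V E 7 (cycle_adj 7)"
    and "maximal_nice_blowup V E B"
    and "i < 5"
    and "x \<in> A3 V E B i" and "y \<in> A3 V E B i" and "E x y"
  shows "nbhd_in E (B i) x = nbhd_in E (B i) y"
proof -
  have MB: "nice_blowup V E B"
    and max: "\<not> (\<exists>B'. nice_blowup V E B' \<and> blowup_verts B \<subset> blowup_verts B')"
    using assms(6) unfolding maximal_nice_blowup_def by blast+
  interpret S V E B i by (rule S.intro[OF assms(1-5) MB assms(7)])
  have key: "False" if "a \<in> A3 V E B i" "b \<in> A3 V E B i" "E a b" "u \<in> B i" "E a u" "\<not> E b u" for a b u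
    by (rule step[OF max that])
  have yx: "E y x" by (rule Esym[OF assms(10)])
  show ?thesis
    unfolding nbhd_in_def
  proof (rule Collect_cong)
    fix u
    show "(u \<in> B i \<and> E x u) = (u \<in> B i \<and> E y u)"
      using key[OF assms(8) assms(9) assms(10), of u] key[OF assms(9) assms(8) yx, of u] by blast
  qed
qed

end
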